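(* Let $n\ge1$, $N\ge0$ be integers and $a,q,x$ generic nonzero complex parameters. For $\lambda\in\Lambda_{nN}$ define $$A_\lambda(a,q,x,n,N)=\prod_{1\leq i\leq j\leq n}\frac{E(ax^{2-i-j}q^{\lambda_i+\lambda_j})}{E(ax^{2-i-j})}\prod_{1\leq i<j\leq n}\frac{(ax^{3-i-j};q)_{\lambda_i+\lambda_j}}{(aqx^{1-i-j};q)_{\lambda_i+\lambda_j}}\cdot\frac{(ax^{1-n};q,x)_\lambda}{(aq^{N+1};q,x)_\lambda}$$ and $$B_\lambda(q,x,n,N)=\prod_{i=1}^n q^{\lambda_i}x^{2(i-1)\lambda_i}\prod_{1\leq i<j\leq n}\frac{E(x^{j-i}q^{\lambda_i-\lambda_j})}{E(x^{j-i})}\frac{(x^{j-i+1};q)_{\lambda_i-\lambda_j}}{(qx^{j-i-1};q)_{\lambda_i-\lambda_j}}\cdot\frac{(q^{-N};q,x)_\lambda}{(qx^{n-1};q,x)_\lambda}.$$ Then $$A_\lambda(a,q,x,n,N)=A_{\lambda'}(aqx,x^{-1},q^{-1},N,n),\qquad B_\lambda(q,x,n,N)=B_{\lambda'}(x^{-1},q^{-1},N,n),$$ where $\lambda'\in\Lambda_{Nn}$ is the conjugate partition of $\lambda$.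
   Context: Fix $p\in\mathbb C$ with $|p|<1$. For nonzero $y$, $E(y)=\prod_{j=0}^\infty(1-yp^j)(1-p^{j+1}/y)$, $E(y_1,\dots,y_m)=\prod_s E(y_s)$. For a base $Q$ and integer $k\ge0$, $(y;Q)_k=\prod_{j=0}^{k-1}E(yQ^j)$; for $k<0$, $(y;Q)_k=1/(yQ^{k};Q)_{-k}$. For $\lambda\in\mathbb Z^n$ and bases $Q,X$, $(y;Q,X)_\lambda=\prod_{j=1}^n(yX^{1-j};Q)_{\lambda_j}$. Let $\Lambda_{nN}=\{\lambda\in\mathbb Z^n: N\ge\lambda_1\ge\dots\ge\lambda_n\ge0\}$; for $\lambda\in\Lambda_{nN}$ its conjugate is $\lambda'\in\Lambda_{Nn}$ with $\lambda'_j=\#\{i:\lambda_i\ge j\}$, $j=1,\dots,N$. In $A_{\lambda'}(aqx,x^{-1},q^{-1},N,n)$ and $B_{\lambda'}(x^{-1},q^{-1},N,n)$ the defining formulas are applied with $a,q,x,n,N$ replaced by $aqx,x^{-1},q^{-1},N,n$ respectively. *)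

theory Defs
  imports "HOL-Analysis.Analysis"
begin

definition E :: "complex \<Rightarrow> complex \<Rightarrow> complex" where
  "E p y = (\<Prod>j. (1 - y * p ^ j) * (1 - p ^ (j + 1) / y))"

definition qpoch :: "complex \<Rightarrow> complex \<Rightarrow> complex \<Rightarrow> int \<Rightarrow> complex" where
  "qpoch p y Q k =
     (if k \<ge> 0 then (\<Prod>j<nat k. E p (y * Q ^ j))
      else 1 / (\<Prod>j<nat (- k). E p (y * Q powi k * Q ^ j)))"

definition qpochL :: "complex \<Rightarrow> complex \<Rightarrow> complex \<Rightarrow> complex \<Rightarrow> int list \<Rightarrow> complex" where
  "qpochL p y Q X l = (\<Prod>j\<in>{1..length l}. qpoch p (y * X powi (1 - int j)) Q (l ! (j - 1)))"

definition Lambda :: "nat \<Rightarrow> nat \<Rightarrow> int list set" where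
  "Lambda n N = {l. length l = n \<and> (\<forall>i<n. 0 \<le> l ! i \<and> l ! i \<le> int N) \<and>
                    (\<forall>i j. i \<le> j \<longrightarrow> j < n \<longrightarrow> l ! j \<le> l ! i)}"

definition conjp :: "nat \<Rightarrow> int list \<Rightarrow> int list" where
  "conjp N l = map (\<lambda>j. int (card {i. i < length l \<and> int j \<le> l ! i})) [1..<N + 1]"

definition A :: "complex \<Rightarrow> complex \<Rightarrow> complex \<Rightarrow> complex \<Rightarrow> nat \<Rightarrow> nat \<Rightarrow> int list \<Rightarrow> complex" where
  "A p a q x n N l =
    (let lam = (\<lambda>i::nat. l ! (i - 1)) in
      (\<Prod>i\<in>{1..n}. \<Prod>j\<in>{i..n}.
          E p (a * x powi (2 - int i - int j) * q powi (lam i + lam j))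
          / E p (a * x powi (2 - int i - int j)))
    * (\<Prod>i\<in>{1..n}. \<Prod>j\<in>{i<..n}.
          qpoch p (a * x powi (3 - int i - int j)) q (lam i + lam j)
          / qpoch p (a * q * x powi (1 - int i - int j)) q (lam i + lam j))
    * (qpochL p (a * x powi (1 - int n)) q x l / qpochL p (a * q ^ (N + 1)) q x l))"

definition B :: "complex \<Rightarrow> complex \<Rightarrow> complex \<Rightarrow> nat \<Rightarrow> nat \<Rightarrow> int list \<Rightarrow> complex" where
  "B p q x n N l =
    (let lam = (\<lambda>i::nat. l ! (i - 1)) in
      (\<Prod>i\<in>{1..n}. q powi (lam i) * x powi (2 * (int i - 1) * lam i))
    * (\<Prod>i\<in>{1..n}. \<Prod>j\<in>{i<..n}.
          (E p (x powi (int j - int i) * q powi (lam i - lam j)) / E p (x powi (int j - int i)))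
          * (qpoch p (x powi (int j - int i + 1)) q (lam i - lam j)
             / qpoch p (q * x powi (int j - int i - 1)) q (lam i - lam j)))
    * (qpochL p (q powi (- int N)) q x l / qpochL p (q * x ^ (n - 1)) q x l))"

end

theory Submission
  imports Defs
begin


lemma conv_geo:
  fixes p c :: complex
  assumes "norm p < 1"
  shows "convergent_prod (\<lambda>j. 1 - c * p ^ j)"
proof -
  have "summable (\<lambda>j. norm c * norm p ^ j)"
    using assms by (intro summable_mult summable_geometric) auto
  hence "summable (\<lambda>j. norm ((1 - c * p ^ j) - 1))"
    by (simp add: norm_mult norm_power)
  thus ?thesis
    by (intro abs_convergent_prod_imp_convergent_prod summable_imp_abs_convergent_prod)
qed

lemma prodinf_head:
  fixes f :: "nat \<Rightarrow> complex"
  assumes "convergent_prod f"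
  shows "prodinf f = prodinf (\<lambda>n. f (Suc n)) * f 0"
proof -
  have "convergent_prod (\<lambda>n. f (Suc n))" using assms by simp
  hence "(\<lambda>n. f (Suc n)) has_prod prodinf (\<lambda>n. f (Suc n))"
    by (rule convergent_prod_has_prod)
  hence "f has_prod (prodinf (\<lambda>n. f (Suc n)) * f 0)" by (rule has_prod_Suc_imp)
  thus ?thesis by (rule has_prod_unique[symmetric])
qed

lemma E_inv:
  fixes p y :: complex
  assumes p: "norm p < 1" and y: "y \<noteq> 0"
  shows "E p (inverse y) = - E p y / y"
proof -
  define F where "F = (\<lambda>j::nat. 1 - y * p ^ j)"
  define G where "G = (\<lambda>j::nat. 1 - (p / y) * p ^ j)"
  define G' where "G' = (\<lambda>j::nat. 1 - (1 / y) * p ^ j)"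
  have cF: "convergent_prod F" unfolding F_def by (rule conv_geo[OF p])
  have cG: "convergent_prod G" unfolding G_def by (rule conv_geo[OF p])
  have cG': "convergent_prod G'" unfolding G'_def by (rule conv_geo[OF p])
  have cFS: "convergent_prod (\<lambda>n. F (Suc n))" using cF by simp
  have e1: "E p y = prodinf F * prodinf G"
    unfolding E_def F_def G_def
    by (subst prodinf_mult[OF cF[unfolded F_def] cG[unfolded G_def]])
       (simp add: field_simps)
  have e2: "E p (inverse y) = prodinf G' * prodinf (\<lambda>n. F (Suc n))"
    unfolding E_def F_def G'_def
    by (subst prodinf_mult[OF cG'[unfolded G'_def] cFS[unfolded F_def]])
       (simp add: field_simps)
  have h1: "prodinf F = prodinf (\<lambda>n. F (Suc n)) * (1 - y)"
    using prodinf_head[OF cF] by (simp add: F_def)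
  have h2: "prodinf G' = prodinf G * (1 - 1 / y)"
    using prodinf_head[OF cG'] by (simp add: G'_def G_def field_simps)
  show ?thesis using y unfolding e1 e2 h1 h2 by (simp add: field_simps)
qed



definition part :: "nat \<Rightarrow> nat \<Rightarrow> (nat \<Rightarrow> int) \<Rightarrow> bool" where
  "part n N lam \<longleftrightarrow> (\<forall>i\<in>{1..n}. 0 \<le> lam i \<and> lam i \<le> int N) \<and>
     (\<forall>i j. 1 \<le> i \<longrightarrow> i \<le> j \<longrightarrow> j \<le> n \<longrightarrow> lam j \<le> lam i)"

definition cnj :: "nat \<Rightarrow> (nat \<Rightarrow> int) \<Rightarrow> nat \<Rightarrow> int" where
  "cnj n lam i = int (card {j\<in>{1..n}. int i \<le> lam j})"

lemma part_cnj:
  assumes "part n N lam" shows "part N n (cnj n lam)"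
  unfolding part_def
proof (intro conjI allI impI ballI)
  fix i assume i: "i \<in> {1..N}"
  show "0 \<le> cnj n lam i" by (simp add: cnj_def)
  have "card {j\<in>{1..n}. int i \<le> lam j} \<le> card {1..n}" by (intro card_mono) auto
  thus "cnj n lam i \<le> int n" by (simp add: cnj_def)
next
  fix i j assume "1 \<le> i" "i \<le> j" "j \<le> N"
  have "card {j'\<in>{1..n}. int j \<le> lam j'} \<le> card {j'\<in>{1..n}. int i \<le> lam j'}"
    using \<open>i \<le> j\<close> by (intro card_mono) auto
  thus "cnj n lam j \<le> cnj n lam i" by (simp add: cnj_def)
qed

lemma cnj_zero:
  assumes "\<forall>j\<in>{1..n}. lam j = 0" "i \<ge> 1" shows "cnj n lam i = 0"
proof -
  have "{j\<in>{1..n}. int i \<le> lam j} = {}" using assms by auto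
  thus ?thesis by (simp add: cnj_def)
qed

lemma cnj_step:
  assumes p: "part n N lam" and p': "part n N lam'" and k: "k \<in> {1..n}"
    and lk: "lam' k = lam k + 1" and oth: "\<forall>j\<in>{1..n}. j \<noteq> k \<longrightarrow> lam' j = lam j"
  defines "c \<equiv> nat (lam k + 1)"
  shows "int c = lam k + 1" "c \<in> {1..N}" "cnj n lam c = int k - 1" "cnj n lam' c = int k"
    "\<forall>i. i \<noteq> c \<longrightarrow> cnj n lam' i = cnj n lam i"
proof -
  have l0: "0 \<le> lam k" "lam k \<le> int N" "lam' k \<le> int N" using p p' k unfolding part_def by auto
  show ci: "int c = lam k + 1" using l0 by (simp add: c_def)
  show "c \<in> {1..N}" using l0 lk ci by auto
  have s1: "{j\<in>{1..n}. int c \<le> lam j} = {1..<k}"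
  proof (intro set_eqI iffI)
    fix j assume j: "j \<in> {j\<in>{1..n}. int c \<le> lam j}"
    have "\<not> k \<le> j"
    proof
      assume "k \<le> j"
      hence "lam j \<le> lam k" using p k j unfolding part_def by auto
      thus False using j ci by auto
    qed
    thus "j \<in> {1..<k}" using j by auto
  next
    fix j assume j: "j \<in> {1..<k}"
    hence "lam' k \<le> lam' j" using p' k unfolding part_def by auto
    moreover have "lam' j = lam j" using oth j k by auto
    ultimately show "j \<in> {j\<in>{1..n}. int c \<le> lam j}" using j k ci lk by auto
  qed
  show "cnj n lam c = int k - 1" unfolding cnj_def s1 using k by auto
  have s2: "{j\<in>{1..n}. int c \<le> lam' j} = {1..k}"
  proof (intro set_eqI iffI)
    fix j assume j: "j \<in> {j\<in>{1..n}. int c \<le> lam' j}"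
    have "\<not> k < j"
    proof
      assume "k < j"
      hence "lam j \<le> lam k" "lam' j = lam j" using p k j oth unfolding part_def by auto
      thus False using j ci by auto
    qed
    thus "j \<in> {1..k}" using j by auto
  next
    fix j assume j: "j \<in> {1..k}"
    hence "lam' k \<le> lam' j" using p' k unfolding part_def by auto
    thus "j \<in> {j\<in>{1..n}. int c \<le> lam' j}" using j k ci lk by auto
  qed
  show "cnj n lam' c = int k" unfolding cnj_def s2 using k by auto
  show "\<forall>i. i \<noteq> c \<longrightarrow> cnj n lam' i = cnj n lam i"
  proof (intro allI impI)
    fix i assume "i \<noteq> c"
    hence "int i \<noteq> lam k + 1" using ci by auto
    have "{j\<in>{1..n}. int i \<le> lam' j} = {j\<in>{1..n}. int i \<le> lam j}"
    proof (intro set_eqI)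
      fix j show "(j \<in> {j\<in>{1..n}. int i \<le> lam' j}) = (j \<in> {j\<in>{1..n}. int i \<le> lam j})"
        using oth lk \<open>int i \<noteq> lam k + 1\<close> by (cases "j = k") auto
    qed
    thus "cnj n lam' i = cnj n lam i" by (simp add: cnj_def)
  qed
qed

lemma part_induct[consumes 1, case_names base step]:
  assumes "part n N lam"
    and base: "\<And>lam. part n N lam \<Longrightarrow> (\<forall>j\<in>{1..n}. lam j = 0) \<Longrightarrow> P lam"
    and step: "\<And>lam lam' k. part n N lam \<Longrightarrow> part n N lam' \<Longrightarrow> k \<in> {1..n} \<Longrightarrow>
        lam' k = lam k + 1 \<Longrightarrow> (\<forall>j\<in>{1..n}. j \<noteq> k \<longrightarrow> lam' j = lam j) \<Longrightarrow> P lam \<Longrightarrow> P lam'"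
  shows "P lam"
proof -
  have "\<And>lam. part n N lam \<Longrightarrow> nat (\<Sum>j\<in>{1..n}. lam j) = s \<Longrightarrow> P lam" for s
  proof (induction s)
    case 0
    have nn: "\<forall>j\<in>{1..n}. 0 \<le> lam j" using 0 unfolding part_def by auto
    have "0 \<le> (\<Sum>j\<in>{1..n}. lam j)" using nn by (intro sum_nonneg) auto
    hence "(\<Sum>j\<in>{1..n}. lam j) = 0" using 0 by simp
    hence "\<forall>j\<in>{1..n}. lam j = 0" using nn sum_nonneg_eq_0_iff[of "{1..n}" lam] by auto
    thus ?case using base 0 by blast
  next
    case (Suc s)
    note p' = Suc.prems(1)
    have nn: "\<forall>j\<in>{1..n}. 0 \<le> lam j" using p' unfolding part_def by auto
    define S where "S = {j\<in>{1..n}. 0 < lam j}"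
    have "S \<noteq> {}"
    proof
      assume "S = {}"
      hence "\<forall>j\<in>{1..n}. lam j = 0" using nn unfolding S_def by force
      thus False using Suc.prems(2) by simp
    qed
    have fS: "finite S" unfolding S_def by auto
    define k where "k = Max S"
    have kS: "k \<in> S" using fS \<open>S \<noteq> {}\<close> unfolding k_def by (rule Max_in)
    have kmax: "\<And>j. j \<in> {1..n} \<Longrightarrow> k < j \<Longrightarrow> lam j = 0"
    proof -
      fix j assume j: "j \<in> {1..n}" "k < j"
      have "j \<notin> S" using Max_ge[OF fS, of j] j unfolding k_def by auto
      hence "\<not> 0 < lam j" using j unfolding S_def by auto
      moreover have "0 \<le> lam j" using nn j by auto
      ultimately show "lam j = 0" by simp
    qed
    define mu where "mu = lam(k := lam k - 1)"
    have k1: "k \<in> {1..n}" and lk: "0 < lam k" using kS unfolding S_def by auto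
    have pmu: "part n N mu"
    proof -
      have a: "\<forall>i\<in>{1..n}. 0 \<le> mu i \<and> mu i \<le> int N"
      proof
        fix i assume i: "i \<in> {1..n}"
        have "0 \<le> lam i \<and> lam i \<le> int N" "lam k \<le> int N" using p' i k1 unfolding part_def by auto
        thus "0 \<le> mu i \<and> mu i \<le> int N"
          using lk unfolding mu_def by auto
      qed
      have b: "\<forall>i j. 1 \<le> i \<longrightarrow> i \<le> j \<longrightarrow> j \<le> n \<longrightarrow> mu j \<le> mu i"
      proof (intro allI impI)
        fix i j assume ij: "1 \<le> i" "i \<le> j" "j \<le> n"
        have "lam j \<le> lam i" using p' ij unfolding part_def by auto
        moreover have "i = k \<Longrightarrow> j \<noteq> k \<Longrightarrow> lam j = 0" using kmax ij by auto
        ultimately show "mu j \<le> mu i" unfolding mu_def using lk by auto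
      qed
      show ?thesis using a b unfolding part_def by blast
    qed
    have sm: "(\<Sum>j\<in>{1..n}. lam j) = (\<Sum>j\<in>{1..n}. mu j) + 1"
    proof -
      have "(\<Sum>j\<in>{1..n}. lam j) = lam k + (\<Sum>j\<in>{1..n}-{k}. lam j)"
        using k1 by (simp add: sum.remove)
      moreover have "(\<Sum>j\<in>{1..n}. mu j) = mu k + (\<Sum>j\<in>{1..n}-{k}. mu j)"
        using k1 by (simp add: sum.remove)
      moreover have "(\<Sum>j\<in>{1..n}-{k}. mu j) = (\<Sum>j\<in>{1..n}-{k}. lam j)"
        by (intro sum.cong) (auto simp: mu_def)
      ultimately show ?thesis by (simp add: mu_def)
    qed
    have "0 \<le> (\<Sum>j\<in>{1..n}. mu j)" using pmu unfolding part_def by (auto intro: sum_nonneg)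
    hence "nat (\<Sum>j\<in>{1..n}. mu j) = s" using Suc.prems(2) sm by linarith
    hence "P mu" using Suc.IH pmu by blast
    moreover have "lam k = mu k + 1" "\<forall>j\<in>{1..n}. j \<noteq> k \<longrightarrow> lam j = mu j"
      unfolding mu_def by auto
    ultimately show ?case using step[OF pmu p' k1] by blast
  qed
  thus ?thesis using assms(1) by blast
qed

lemma prod_change1:
  fixes g g' :: "'b \<Rightarrow> 'a::field"
  assumes "finite S" "k \<in> S" "\<forall>j\<in>S. j \<noteq> k \<longrightarrow> g' j = g j" "g k \<noteq> 0"
  shows "prod g' S = prod g S * (g' k / g k)"
proof -
  have "prod g' S = g' k * prod g' (S - {k})" using assms by (simp add: prod.remove)
  also have "prod g' (S - {k}) = prod g (S - {k})" using assms by (intro prod.cong) auto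
  also have "prod g S = g k * prod g (S - {k})" using assms by (simp add: prod.remove)
  ultimately show ?thesis using assms by (simp add: field_simps)
qed

lemma prod_telescope_int:
  fixes f :: "int \<Rightarrow> 'a::field"
  assumes "\<forall>a. f a \<noteq> 0"
  shows "(\<Prod>j\<in>{1..n}. f (int j) / f (int j - 1)) = f (int n) / f 0"
proof (induction n)
  case 0 thus ?case using assms by simp
next
  case (Suc n)
  have "{1..Suc n} = insert (Suc n) {1..n}" by auto
  hence "(\<Prod>j\<in>{1..Suc n}. f (int j) / f (int j - 1)) = f (int (Suc n)) / f (int n) * (f (int n) / f 0)"
    using Suc by simp
  thus ?case using assms by simp
qed

lemma boundary:
  fixes Phi :: "int \<Rightarrow> int \<Rightarrow> complex"
  assumes "part n N lam" and nz: "\<forall>a b. Phi a b \<noteq> 0"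
  shows "(\<Prod>j\<in>{1..n}. Phi (lam j) (int j) / Phi (lam j) (int j - 1)) *
         (\<Prod>i\<in>{1..N}. Phi (int i - 1) (cnj n lam i) / Phi (int i) (cnj n lam i))
       = Phi 0 (int n) / Phi (int N) 0"
  using assms(1)
proof (induction rule: part_induct)
  case (base lam)
  have c0: "\<forall>i\<in>{1..N}. cnj n lam i = 0" using base cnj_zero by auto
  have "(\<Prod>j\<in>{1..n}. Phi (lam j) (int j) / Phi (lam j) (int j - 1)) =
        (\<Prod>j\<in>{1..n}. Phi 0 (int j) / Phi 0 (int j - 1))"
    using base by (intro prod.cong) auto
  also have "\<dots> = Phi 0 (int n) / Phi 0 0"
    using prod_telescope_int[of "Phi 0"] nz by simp
  finally have 1: "(\<Prod>j\<in>{1..n}. Phi (lam j) (int j) / Phi (lam j) (int j - 1)) = Phi 0 (int n) / Phi 0 0" .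
  have "(\<Prod>i\<in>{1..N}. Phi (int i - 1) (cnj n lam i) / Phi (int i) (cnj n lam i)) =
        (\<Prod>i\<in>{1..N}. inverse (Phi (int i) 0 / Phi (int i - 1) 0))"
    using c0 by (intro prod.cong) auto
  also have "\<dots> = inverse (\<Prod>i\<in>{1..N}. Phi (int i) 0 / Phi (int i - 1) 0)"
    using prod_inversef[of "\<lambda>i. Phi (int i) 0 / Phi (int i - 1) 0" "{1..N}"] by (simp add: comp_def)
  also have "\<dots> = inverse (Phi (int N) 0 / Phi 0 0)"
    using prod_telescope_int[of "\<lambda>a. Phi a 0"] nz by simp
  finally have 2: "(\<Prod>i\<in>{1..N}. Phi (int i - 1) (cnj n lam i) / Phi (int i) (cnj n lam i)) = Phi 0 0 / Phi (int N) 0"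
    using nz by simp
  show ?case unfolding 1 2 using nz by simp
next
  case (step lam lam' k)
  define c where "c = nat (lam k + 1)"
  note cs = cnj_step[OF step(1-5), folded c_def]
  have e1: "(\<Prod>j\<in>{1..n}. Phi (lam' j) (int j) / Phi (lam' j) (int j - 1)) =
    (\<Prod>j\<in>{1..n}. Phi (lam j) (int j) / Phi (lam j) (int j - 1)) *
    ((Phi (lam' k) (int k) / Phi (lam' k) (int k - 1)) / (Phi (lam k) (int k) / Phi (lam k) (int k - 1)))"
    using step(3,5) nz by (intro prod_change1) auto
  have e2: "(\<Prod>i\<in>{1..N}. Phi (int i - 1) (cnj n lam' i) / Phi (int i) (cnj n lam' i)) =
    (\<Prod>i\<in>{1..N}. Phi (int i - 1) (cnj n lam i) / Phi (int i) (cnj n lam i)) *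
    ((Phi (int c - 1) (cnj n lam' c) / Phi (int c) (cnj n lam' c)) / (Phi (int c - 1) (cnj n lam c) / Phi (int c) (cnj n lam c)))"
    using cs nz by (intro prod_change1) auto
  have r: "((Phi (lam' k) (int k) / Phi (lam' k) (int k - 1)) / (Phi (lam k) (int k) / Phi (lam k) (int k - 1))) *
    ((Phi (int c - 1) (cnj n lam' c) / Phi (int c) (cnj n lam' c)) / (Phi (int c - 1) (cnj n lam c) / Phi (int c) (cnj n lam c))) = 1"
    unfolding cs(1,3,4) step(4) using nz by (simp add: field_simps)
  show ?case unfolding e1 e2 using step(6) r
    by (metis (no_types, lifting) mult.assoc mult.left_commute mult.right_neutral)
qed



lemma split3:
  fixes f :: "nat \<Rightarrow> 'a::comm_monoid_mult"
  assumes "k \<in> {1..n}"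
  shows "prod f {1..n} = prod f {1..<k} * f k * prod f {k<..n}"
proof -
  have "{1..n} = ({1..<k} \<union> {k}) \<union> {k<..n}" using assms by auto
  moreover have "prod f (({1..<k} \<union> {k}) \<union> {k<..n}) = prod f ({1..<k} \<union> {k}) * prod f {k<..n}"
    by (intro prod.union_disjoint) auto
  moreover have "prod f ({1..<k} \<union> {k}) = prod f {1..<k} * f k"
    by (subst prod.union_disjoint) auto
  ultimately show ?thesis by simp
qed

lemma pair_change:
  fixes F F' :: "nat \<Rightarrow> nat \<Rightarrow> complex"
  assumes k: "k \<in> {1..n}"
    and eq: "\<And>i j. i \<in> {1..n} \<Longrightarrow> j \<in> {1..n} \<Longrightarrow> i < j \<Longrightarrow> i \<noteq> k \<Longrightarrow> j \<noteq> k \<Longrightarrow> F' i j = F i j"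
    and nz: "\<And>i j. F i j \<noteq> 0"
  shows "(\<Prod>i\<in>{1..n}. \<Prod>j\<in>{i<..n}. F' i j) = (\<Prod>i\<in>{1..n}. \<Prod>j\<in>{i<..n}. F i j) *
     ((\<Prod>i\<in>{1..<k}. F' i k / F i k) * (\<Prod>j\<in>{k<..n}. F' k j / F k j))"
proof -
  define r where "r i j = F' i j / F i j" for i j
  have "(\<Prod>i\<in>{1..n}. \<Prod>j\<in>{i<..n}. F' i j) = (\<Prod>i\<in>{1..n}. \<Prod>j\<in>{i<..n}. F i j * r i j)"
    using nz by (intro prod.cong refl) (simp add: r_def)
  also have "\<dots> = (\<Prod>i\<in>{1..n}. \<Prod>j\<in>{i<..n}. F i j) * (\<Prod>i\<in>{1..n}. \<Prod>j\<in>{i<..n}. r i j)"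
    by (simp add: prod.distrib)
  also have "(\<Prod>i\<in>{1..n}. \<Prod>j\<in>{i<..n}. r i j) =
      (\<Prod>i\<in>{1..n}. if i < k then r i k else if i = k then (\<Prod>j\<in>{k<..n}. r k j) else 1)"
  proof (intro prod.cong refl)
    fix i assume i: "i \<in> {1..n}"
    show "(\<Prod>j\<in>{i<..n}. r i j) = (if i < k then r i k else if i = k then (\<Prod>j\<in>{k<..n}. r k j) else 1)"
    proof (cases "i < k")
      case True
      have "(\<Prod>j\<in>{i<..n}. r i j) = r i k * (\<Prod>j\<in>{i<..n} - {k}. r i j)"
        using True k by (intro prod.remove) auto
      also have "(\<Prod>j\<in>{i<..n} - {k}. r i j) = 1"
        using True i k nz eq by (intro prod.neutral) (auto simp: r_def)
      finally show ?thesis using True by simp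
    next
      case False
      show ?thesis
      proof (cases "i = k")
        case True thus ?thesis by simp
      next
        case False2: False
        have "(\<Prod>j\<in>{i<..n}. r i j) = 1"
          using False False2 i k nz eq by (intro prod.neutral) (auto simp: r_def)
        thus ?thesis using False False2 by simp
      qed
    qed
  qed
  also have "\<dots> = (\<Prod>i\<in>{1..<k}. r i k) * (\<Prod>j\<in>{k<..n}. r k j)"
  proof -
    let ?g = "\<lambda>i. if i < k then r i k else if i = k then (\<Prod>j\<in>{k<..n}. r k j) else 1"
    have "prod ?g {1..n} = prod ?g {1..<k} * ?g k * prod ?g {k<..n}" by (rule split3[OF k])
    moreover have "prod ?g {1..<k} = (\<Prod>i\<in>{1..<k}. r i k)" by (intro prod.cong) auto
    moreover have "prod ?g {k<..n} = 1" by (intro prod.neutral) auto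
    ultimately show ?thesis by simp
  qed
  finally show ?thesis by (simp add: r_def)
qed

definition chiA :: "(int \<Rightarrow> int \<Rightarrow> complex) \<Rightarrow> int \<Rightarrow> int \<Rightarrow> complex" where
  "chiA f u s = f (s + 1) (2 - u) * f s (3 - u) / (f s (2 - u) * f (s + 1) (1 - u))"

definition PA :: "(int \<Rightarrow> int \<Rightarrow> complex) \<Rightarrow> int \<Rightarrow> int \<Rightarrow> complex" where
  "PA f u S = (\<Prod>t<nat S. chiA f u (int t))"

definition QA :: "(int \<Rightarrow> int \<Rightarrow> complex) \<Rightarrow> nat \<Rightarrow> nat \<Rightarrow> nat \<Rightarrow> int \<Rightarrow> complex" where
  "QA f n N j L = (\<Prod>t<nat L. f (int t) (2 - int n - int j) / f (int N + 1 + int t) (1 - int j))"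

definition AN :: "(int \<Rightarrow> int \<Rightarrow> complex) \<Rightarrow> nat \<Rightarrow> nat \<Rightarrow> (nat \<Rightarrow> int) \<Rightarrow> complex" where
  "AN f n N lam =
     (\<Prod>i\<in>{1..n}. f (2 * lam i) (2 - 2 * int i) / f 0 (2 - 2 * int i)) *
     (\<Prod>i\<in>{1..n}. \<Prod>j\<in>{i<..n}. PA f (int i + int j) (lam i + lam j)) *
     (\<Prod>j\<in>{1..n}. QA f n N j (lam j))"

definition RA :: "(int \<Rightarrow> int \<Rightarrow> complex) \<Rightarrow> nat \<Rightarrow> nat \<Rightarrow> (nat \<Rightarrow> int) \<Rightarrow> nat \<Rightarrow> complex" where
  "RA f n N lam k =
     (\<Prod>j\<in>{1..n}. chiA f (int k + int j) (lam k + lam j)) / chiA f (int k + int k) (lam k + lam k) *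
     (f (2 * lam k + 2) (2 - 2 * int k) / f (2 * lam k) (2 - 2 * int k)) *
     (f (lam k) (2 - int n - int k) / f (int N + 1 + lam k) (1 - int k))"

lemma chiA_nz: "\<forall>a b. f a b \<noteq> 0 \<Longrightarrow> chiA f u s \<noteq> 0"
  by (simp add: chiA_def)

lemma PA_nz: "\<forall>a b. f a b \<noteq> 0 \<Longrightarrow> PA f u s \<noteq> 0"
  by (simp add: PA_def chiA_nz)

lemma QA_nz: "\<forall>a b. f a b \<noteq> 0 \<Longrightarrow> QA f n N j L \<noteq> 0"
  by (simp add: QA_def)

lemma PA_Suc: "0 \<le> S \<Longrightarrow> PA f u (S + 1) = PA f u S * chiA f u S"
proof -
  assume "0 \<le> S"
  hence "nat (S + 1) = Suc (nat S)" by simp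
  thus ?thesis using \<open>0 \<le> S\<close> by (simp add: PA_def)
qed

lemma QA_Suc: "0 \<le> L \<Longrightarrow> QA f n N j (L + 1) = QA f n N j L *
    (f L (2 - int n - int j) / f (int N + 1 + L) (1 - int j))"
proof -
  assume "0 \<le> L"
  hence "nat (L + 1) = Suc (nat L)" by simp
  thus ?thesis using \<open>0 \<le> L\<close> by (simp add: QA_def)
qed

lemma AN_step:
  assumes nz: "\<forall>a b. f a b \<noteq> 0" and p: "part n N lam" and p': "part n N lam'" and k: "k \<in> {1..n}"
    and lk: "lam' k = lam k + 1" and oth: "\<forall>j\<in>{1..n}. j \<noteq> k \<longrightarrow> lam' j = lam j"
  shows "AN f n N lam' = AN f n N lam * RA f n N lam k"
proof -
  have nn: "\<And>i. i \<in> {1..n} \<Longrightarrow> 0 \<le> lam i" using p unfolding part_def by auto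
  have d: "(\<Prod>i\<in>{1..n}. f (2 * lam' i) (2 - 2 * int i) / f 0 (2 - 2 * int i)) =
     (\<Prod>i\<in>{1..n}. f (2 * lam i) (2 - 2 * int i) / f 0 (2 - 2 * int i)) *
     ((f (2 * lam' k) (2 - 2 * int k) / f 0 (2 - 2 * int k)) / (f (2 * lam k) (2 - 2 * int k) / f 0 (2 - 2 * int k)))"
    using k oth nz by (intro prod_change1) auto
  have d': "(f (2 * lam' k) (2 - 2 * int k) / f 0 (2 - 2 * int k)) / (f (2 * lam k) (2 - 2 * int k) / f 0 (2 - 2 * int k))
     = f (2 * lam k + 2) (2 - 2 * int k) / f (2 * lam k) (2 - 2 * int k)"
    using nz lk by (simp add: field_simps)
  have q: "(\<Prod>j\<in>{1..n}. QA f n N j (lam' j)) = (\<Prod>j\<in>{1..n}. QA f n N j (lam j)) *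
      (QA f n N k (lam' k) / QA f n N k (lam k))"
    using k oth nz QA_nz by (intro prod_change1) auto
  have q': "QA f n N k (lam' k) / QA f n N k (lam k) = f (lam k) (2 - int n - int k) / f (int N + 1 + lam k) (1 - int k)"
    using QA_Suc[of "lam k" f n N k] nn[OF k] lk QA_nz[OF nz] by (simp add: field_simps)
  have pc: "(\<Prod>i\<in>{1..n}. \<Prod>j\<in>{i<..n}. PA f (int i + int j) (lam' i + lam' j)) =
     (\<Prod>i\<in>{1..n}. \<Prod>j\<in>{i<..n}. PA f (int i + int j) (lam i + lam j)) *
     ((\<Prod>i\<in>{1..<k}. PA f (int i + int k) (lam' i + lam' k) / PA f (int i + int k) (lam i + lam k)) *
      (\<Prod>j\<in>{k<..n}. PA f (int k + int j) (lam' k + lam' j) / PA f (int k + int j) (lam k + lam j)))"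
    by (rule pair_change[OF k]) (use oth PA_nz[OF nz] in auto)
  have p1: "(\<Prod>i\<in>{1..<k}. PA f (int i + int k) (lam' i + lam' k) / PA f (int i + int k) (lam i + lam k))
     = (\<Prod>i\<in>{1..<k}. chiA f (int k + int i) (lam k + lam i))"
  proof (intro prod.cong refl)
    fix i assume i: "i \<in> {1..<k}"
    hence "lam' i = lam i" "0 \<le> lam i + lam k" using oth k nn by auto
    thus "PA f (int i + int k) (lam' i + lam' k) / PA f (int i + int k) (lam i + lam k) = chiA f (int k + int i) (lam k + lam i)"
      using PA_Suc[of "lam i + lam k" f "int i + int k"] lk PA_nz[OF nz]
      by (simp add: add.commute add.left_commute)
  qed
  have p2: "(\<Prod>j\<in>{k<..n}. PA f (int k + int j) (lam' k + lam' j) / PA f (int k + int j) (lam k + lam j))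
     = (\<Prod>j\<in>{k<..n}. chiA f (int k + int j) (lam k + lam j))"
  proof (intro prod.cong refl)
    fix j assume j: "j \<in> {k<..n}"
    hence "lam' j = lam j" "0 \<le> lam k + lam j" using oth k nn by auto
    thus "PA f (int k + int j) (lam' k + lam' j) / PA f (int k + int j) (lam k + lam j) = chiA f (int k + int j) (lam k + lam j)"
      using PA_Suc[of "lam k + lam j" f "int k + int j"] lk PA_nz[OF nz]
      by (simp add: add.commute add.left_commute)
  qed
  have full: "(\<Prod>j\<in>{1..n}. chiA f (int k + int j) (lam k + lam j)) =
     (\<Prod>i\<in>{1..<k}. chiA f (int k + int i) (lam k + lam i)) * chiA f (int k + int k) (lam k + lam k) *
     (\<Prod>j\<in>{k<..n}. chiA f (int k + int j) (lam k + lam j))"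
    using split3[OF k, of "\<lambda>j. chiA f (int k + int j) (lam k + lam j)"] by simp
  have cz: "chiA f (int k + int k) (lam k + lam k) \<noteq> 0" using chiA_nz[OF nz] .
  have canc: "\<And>P1 P2. P1 * chiA f (int k + int k) (lam k + lam k) * P2 / chiA f (int k + int k) (lam k + lam k) = P1 * P2"
    using cz by simp
  show ?thesis
    unfolding AN_def RA_def d d' q q' pc p1 p2 full canc
    by (simp only: mult_ac)
qed



lemma RA_alg:
  fixes f :: "int \<Rightarrow> int \<Rightarrow> complex" and L K n N :: int
  assumes nz: "\<forall>a b. f a b \<noteq> 0"
  shows "(P * (f (L + 1 - 1 + N) (2 - K - 0) * f (L + 1 + N) (1 - K - 0)) /
            (f (L + 1 - 1 + 0) (2 - K - n) * f (L + 1 + 0) (1 - K - n)))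
           / chiA f (K + K) (L + L) * (f (2 * L + 2) (2 - 2 * K) / f (2 * L) (2 - 2 * K)) *
           (f L (2 - n - K) / f (N + 1 + L) (1 - K))
       = P / chiA (\<lambda>a b. f (1 - b) (1 - a)) ((L + 1) + (L + 1)) ((K - 1) + (K - 1)) *
           (f (1 - (2 - 2 * (L + 1))) (1 - (2 * (K - 1) + 2)) / f (1 - (2 - 2 * (L + 1))) (1 - 2 * (K - 1))) *
           (f (1 - (2 - N - (L + 1))) (1 - (K - 1)) / f (1 - (1 - (L + 1))) (1 - (n + 1 + (K - 1))))"
proof -
  have e: "\<And>a b c d. a = c \<Longrightarrow> b = d \<Longrightarrow> f a b = f c d" by simp
  show ?thesis
    unfolding chiA_def
    apply (simp add: algebra_simps)
    using nz apply (simp add: field_simps)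
    done
qed

lemma RA_dual:
  assumes nz: "\<forall>a b. f a b \<noteq> 0" and p: "part n N lam" and p': "part n N lam'" and k: "k \<in> {1..n}"
    and lk: "lam' k = lam k + 1" and oth: "\<forall>j\<in>{1..n}. j \<noteq> k \<longrightarrow> lam' j = lam j"
  defines "c \<equiv> nat (lam k + 1)"
  shows "RA f n N lam k = RA (\<lambda>a b. f (1 - b) (1 - a)) N n (cnj n lam) c"
proof -
  note cs = cnj_step[OF p p' k lk oth, folded c_def]
  define g where "g = (\<lambda>a b. f (1 - b) (1 - a))"
  define Phi where "Phi a b = f (lam k + 1 - 1 + a) (2 - int k - b) * f (lam k + 1 + a) (1 - int k - b)" for a b
  have Pnz: "\<forall>a b. Phi a b \<noteq> 0" using nz by (simp add: Phi_def)
  have bd: "(\<Prod>j\<in>{1..n}. Phi (lam j) (int j) / Phi (lam j) (int j - 1)) *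
         (\<Prod>i\<in>{1..N}. Phi (int i - 1) (cnj n lam i) / Phi (int i) (cnj n lam i))
       = Phi 0 (int n) / Phi (int N) 0" by (rule boundary[OF p Pnz])
  have t1: "chiA f (int k + int j) (lam k + lam j) = Phi (lam j) (int j - 1) / Phi (lam j) (int j)" for j
    unfolding chiA_def Phi_def by (simp add: algebra_simps)
  have t2: "chiA g (int c + int i) (cnj n lam c + cnj n lam i) = Phi (int i - 1) (cnj n lam i) / Phi (int i) (cnj n lam i)" for i
    unfolding chiA_def Phi_def g_def cs(1,3) by (simp add: algebra_simps)
  define P where "P = (\<Prod>i\<in>{1..N}. Phi (int i - 1) (cnj n lam i) / Phi (int i) (cnj n lam i))"
  have s1: "(\<Prod>j\<in>{1..n}. chiA f (int k + int j) (lam k + lam j)) = P * (Phi (int N) 0 / Phi 0 (int n))"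
  proof -
    have "(\<Prod>j\<in>{1..n}. chiA f (int k + int j) (lam k + lam j)) =
        (\<Prod>j\<in>{1..n}. inverse (Phi (lam j) (int j) / Phi (lam j) (int j - 1)))"
      unfolding t1 by simp
    also have "\<dots> = inverse (\<Prod>j\<in>{1..n}. Phi (lam j) (int j) / Phi (lam j) (int j - 1))"
      using prod_inversef[of "\<lambda>j. Phi (lam j) (int j) / Phi (lam j) (int j - 1)" "{1..n}"] by (simp add: comp_def)
    also have "\<dots> = P * (Phi (int N) 0 / Phi 0 (int n))"
      using bd Pnz unfolding P_def by (simp add: field_simps)
    finally show ?thesis .
  qed
  have s2: "(\<Prod>i\<in>{1..N}. chiA g (int c + int i) (cnj n lam c + cnj n lam i)) = P"
    unfolding t2 P_def by simp
  have "RA f n N lam k = (P * (f (lam k + 1 - 1 + int N) (2 - int k - 0) * f (lam k + 1 + int N) (1 - int k - 0)) /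
            (f (lam k + 1 - 1 + 0) (2 - int k - int n) * f (lam k + 1 + 0) (1 - int k - int n)))
           / chiA f (int k + int k) (lam k + lam k) * (f (2 * lam k + 2) (2 - 2 * int k) / f (2 * lam k) (2 - 2 * int k)) *
           (f (lam k) (2 - int n - int k) / f (int N + 1 + lam k) (1 - int k))"
    unfolding RA_def s1 by (simp only: Phi_def times_divide_eq_right)
  also have "\<dots> = P / chiA g ((lam k + 1) + (lam k + 1)) ((int k - 1) + (int k - 1)) *
           (f (1 - (2 - 2 * (lam k + 1))) (1 - (2 * (int k - 1) + 2)) / f (1 - (2 - 2 * (lam k + 1))) (1 - 2 * (int k - 1))) *
           (f (1 - (2 - int N - (lam k + 1))) (1 - (int k - 1)) / f (1 - (1 - (lam k + 1))) (1 - (int n + 1 + (int k - 1))))"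
    unfolding g_def by (rule RA_alg[OF nz])
  also have "\<dots> = RA g N n (cnj n lam) c"
    unfolding RA_def unfolding s2 unfolding cs(1,3) g_def by (rule refl)
  finally show ?thesis unfolding g_def .
qed

lemma AN_zero:
  assumes nz: "\<forall>a b. f a b \<noteq> 0" and z: "\<forall>i\<in>{1..n}. lam i = 0"
  shows "AN f n N lam = 1"
proof -
  have "(\<Prod>i\<in>{1..n}. f (2 * lam i) (2 - 2 * int i) / f 0 (2 - 2 * int i)) = 1"
    using z nz by (intro prod.neutral) auto
  moreover have "(\<Prod>i\<in>{1..n}. \<Prod>j\<in>{i<..n}. PA f (int i + int j) (lam i + lam j)) = 1"
    using z by (intro prod.neutral) (auto intro!: prod.neutral simp: PA_def)
  moreover have "(\<Prod>j\<in>{1..n}. QA f n N j (lam j)) = 1"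
    using z by (intro prod.neutral) (auto simp: QA_def)
  ultimately show ?thesis by (simp add: AN_def)
qed

theorem AN_dual:
  assumes nz: "\<forall>a b. f a b \<noteq> 0" and p: "part n N lam"
  shows "AN f n N lam = AN (\<lambda>a b. f (1 - b) (1 - a)) N n (cnj n lam)"
  using p
proof (induction rule: part_induct)
  case (base lam)
  have "\<forall>i\<in>{1..N}. cnj n lam i = 0" using base cnj_zero by auto
  moreover have "\<forall>a b. (\<lambda>a b. f (1 - b) (1 - a)) a b \<noteq> 0" using nz by simp
  ultimately have "AN (\<lambda>a b. f (1 - b) (1 - a)) N n (cnj n lam) = 1" by (intro AN_zero) auto
  thus ?case using AN_zero[OF nz base(2)] by simp
next
  case (step lam lam' k)
  define c where "c = nat (lam k + 1)"
  note cs = cnj_step[OF step(1-5), folded c_def]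
  have nz': "\<forall>a b. (\<lambda>a b. f (1 - b) (1 - a)) a b \<noteq> 0" using nz by simp
  have "AN (\<lambda>a b. f (1 - b) (1 - a)) N n (cnj n lam') =
      AN (\<lambda>a b. f (1 - b) (1 - a)) N n (cnj n lam) * RA (\<lambda>a b. f (1 - b) (1 - a)) N n (cnj n lam) c"
    by (rule AN_step[OF nz' part_cnj[OF step(1)] part_cnj[OF step(2)]]) (use cs in auto)
  moreover have "AN f n N lam' = AN f n N lam * RA f n N lam k" by (rule AN_step[OF nz step(1-5)])
  moreover have "RA f n N lam k = RA (\<lambda>a b. f (1 - b) (1 - a)) N n (cnj n lam) c"
    unfolding c_def by (rule RA_dual[OF nz step(1-5)])
  ultimately show ?case using step(6) by simp
qed



definition mu :: "complex \<Rightarrow> complex \<Rightarrow> int \<Rightarrow> int \<Rightarrow> complex" where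
  "mu Q X a b = Q powi a * X powi b"

lemma mu_add:
  assumes "Q \<noteq> 0" "X \<noteq> 0" "a = c + e" "b = d + g"
  shows "mu Q X a b = mu Q X c d * mu Q X e g"
  using assms by (simp add: mu_def power_int_add)

lemma mu_nz: "Q \<noteq> 0 \<Longrightarrow> X \<noteq> 0 \<Longrightarrow> mu Q X a b \<noteq> 0"
  by (simp add: mu_def)

definition omegaB :: "(int \<Rightarrow> int \<Rightarrow> complex) \<Rightarrow> int \<Rightarrow> int \<Rightarrow> complex" where
  "omegaB f u s = f (s + 1) u * f s (u + 1) / (f s u * f (s + 1) (u - 1))"

definition PB :: "(int \<Rightarrow> int \<Rightarrow> complex) \<Rightarrow> int \<Rightarrow> int \<Rightarrow> complex" where
  "PB f u d = (\<Prod>t<nat d. omegaB f u (int t))"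

definition QB :: "(int \<Rightarrow> int \<Rightarrow> complex) \<Rightarrow> nat \<Rightarrow> nat \<Rightarrow> nat \<Rightarrow> int \<Rightarrow> complex" where
  "QB f n N j L = (\<Prod>t<nat L. f (int t - int N) (1 - int j) / f (1 + int t) (int n - int j))"

definition BN :: "(int \<Rightarrow> int \<Rightarrow> complex) \<Rightarrow> complex \<Rightarrow> complex \<Rightarrow> nat \<Rightarrow> nat \<Rightarrow> (nat \<Rightarrow> int) \<Rightarrow> complex" where
  "BN f Q X n N lam =
     (\<Prod>i\<in>{1..n}. Q powi lam i * X powi (2 * (int i - 1) * lam i)) *
     (\<Prod>i\<in>{1..n}. \<Prod>j\<in>{i<..n}. PB f (int j - int i) (lam i - lam j)) *
     (\<Prod>j\<in>{1..n}. QB f n N j (lam j))"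

definition RB :: "(int \<Rightarrow> int \<Rightarrow> complex) \<Rightarrow> complex \<Rightarrow> complex \<Rightarrow> nat \<Rightarrow> nat \<Rightarrow> (nat \<Rightarrow> int) \<Rightarrow> nat \<Rightarrow> complex" where
  "RB f Q X n N lam k =
     Q * (\<Prod>j\<in>{1..n}. omegaB f (int j - int k) (lam k - lam j)) / omegaB f 0 0 *
     (f (lam k - int N) (1 - int k) / f (1 + lam k) (int n - int k))"

lemma omegaB_nz: "\<forall>a b. f a b \<noteq> 0 \<Longrightarrow> omegaB f u s \<noteq> 0"
  by (simp add: omegaB_def)

lemma PB_nz: "\<forall>a b. f a b \<noteq> 0 \<Longrightarrow> PB f u s \<noteq> 0"
  by (simp add: PB_def omegaB_nz)

lemma QB_nz: "\<forall>a b. f a b \<noteq> 0 \<Longrightarrow> QB f n N j L \<noteq> 0"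
  by (simp add: QB_def)

lemma PB_Suc: "0 \<le> S \<Longrightarrow> PB f u (S + 1) = PB f u S * omegaB f u S"
proof -
  assume "0 \<le> S"
  hence "nat (S + 1) = Suc (nat S)" by simp
  thus ?thesis using \<open>0 \<le> S\<close> by (simp add: PB_def)
qed

lemma QB_Suc: "0 \<le> L \<Longrightarrow> QB f n N j (L + 1) = QB f n N j L *
    (f (L - int N) (1 - int j) / f (1 + L) (int n - int j))"
proof -
  assume "0 \<le> L"
  hence "nat (L + 1) = Suc (nat L)" by simp
  thus ?thesis using \<open>0 \<le> L\<close> by (simp add: QB_def)
qed

definition flip_ok :: "(int \<Rightarrow> int \<Rightarrow> complex) \<Rightarrow> complex \<Rightarrow> complex \<Rightarrow> bool" where
  "flip_ok f Q X \<longleftrightarrow> (\<forall>a b. (a, b) \<noteq> (0, 0) \<longrightarrow> f (- a) (- b) = - mu Q X (- a) (- b) * f a b)"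

lemma flip_use:
  assumes "flip_ok f Q X" "a' = - a" "b' = - b" "(a, b) \<noteq> (0, 0)"
  shows "f a' b' = - mu Q X a' b' * f a b"
  using assms unfolding flip_ok_def by auto

lemma omega_flip:
  assumes Q: "Q \<noteq> 0" and X: "X \<noteq> 0" and nz: "\<forall>a b. f a b \<noteq> 0" and fl: "flip_ok f Q X"
    and u: "1 \<le> u" and s: "0 \<le> s"
  shows "inverse (omegaB f u s) = X powi (-2) * omegaB f (- u) (- s - 1)"
proof -
  have e: "omegaB f (- u) (- s - 1) = f (- s) (- u) * f (- s - 1) (1 - u) / (f (- s - 1) (- u) * f (- s) (- u - 1))"
    by (simp add: omegaB_def algebra_simps)
  have f1: "f (- s) (- u) = - mu Q X (- s) (- u) * f s u" using u by (intro flip_use[OF fl]) auto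
  have f2: "f (- s - 1) (1 - u) = - mu Q X (- s - 1) (1 - u) * f (s + 1) (u - 1)" using s by (intro flip_use[OF fl]) auto
  have f3: "f (- s - 1) (- u) = - mu Q X (- s - 1) (- u) * f (s + 1) u" using s by (intro flip_use[OF fl]) auto
  have f4: "f (- s) (- u - 1) = - mu Q X (- s) (- u - 1) * f s (u + 1)" using u by (intro flip_use[OF fl]) auto
  have m1: "mu Q X (- s) (- u) = mu Q X (- s - 1) (- u) * mu Q X 1 0" by (rule mu_add[OF Q X]) auto
  have m2: "mu Q X (- s - 1) (1 - u) = mu Q X (- s) (- u - 1) * mu Q X (-1) 2" by (rule mu_add[OF Q X]) auto
  have m3: "mu Q X 1 0 * mu Q X (-1) 2 = X powi 2"
    using Q X by (simp add: mu_def power_int_minus)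
  have x2: "X powi (-2) = inverse (X powi 2)" by (simp add: power_int_minus)
  show ?thesis
    unfolding e unfolding f1 f2 f3 f4 m1 m2 x2 unfolding omegaB_def
    using nz mu_nz[OF Q X] Q X m3
    by (simp add: field_simps)
qed

lemma BN_step:
  assumes Q: "Q \<noteq> 0" and X: "X \<noteq> 0" and nz: "\<forall>a b. f a b \<noteq> 0" and fl: "flip_ok f Q X"
    and p: "part n N lam" and p': "part n N lam'" and k: "k \<in> {1..n}"
    and lk: "lam' k = lam k + 1" and oth: "\<forall>j\<in>{1..n}. j \<noteq> k \<longrightarrow> lam' j = lam j"
  shows "BN f Q X n N lam' = BN f Q X n N lam * RB f Q X n N lam k"
proof -
  have nn: "\<And>i. i \<in> {1..n} \<Longrightarrow> 0 \<le> lam i" using p unfolding part_def by auto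
  have d: "(\<Prod>i\<in>{1..n}. Q powi lam' i * X powi (2 * (int i - 1) * lam' i)) =
     (\<Prod>i\<in>{1..n}. Q powi lam i * X powi (2 * (int i - 1) * lam i)) *
     ((Q powi lam' k * X powi (2 * (int k - 1) * lam' k)) / (Q powi lam k * X powi (2 * (int k - 1) * lam k)))"
    using k oth Q X by (intro prod_change1) auto
  have d': "(Q powi lam' k * X powi (2 * (int k - 1) * lam' k)) / (Q powi lam k * X powi (2 * (int k - 1) * lam k))
     = Q * X powi (2 * (int k - 1))"
  proof -
    have "2 * (int k - 1) * lam' k = 2 * (int k - 1) * lam k + 2 * (int k - 1)" using lk by (simp add: algebra_simps)
    hence "X powi (2 * (int k - 1) * lam' k) = X powi (2 * (int k - 1) * lam k) * X powi (2 * (int k - 1))"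
      using X by (simp add: power_int_add)
    moreover have "Q powi lam' k = Q powi lam k * Q" using lk Q by (simp add: power_int_add)
    ultimately show ?thesis using Q X by simp
  qed
  have q: "(\<Prod>j\<in>{1..n}. QB f n N j (lam' j)) = (\<Prod>j\<in>{1..n}. QB f n N j (lam j)) *
      (QB f n N k (lam' k) / QB f n N k (lam k))"
    using k oth nz QB_nz by (intro prod_change1) auto
  have q': "QB f n N k (lam' k) / QB f n N k (lam k) = f (lam k - int N) (1 - int k) / f (1 + lam k) (int n - int k)"
    using QB_Suc[of "lam k" f n N k] nn[OF k] lk QB_nz[OF nz] by (simp add: field_simps)
  have pc: "(\<Prod>i\<in>{1..n}. \<Prod>j\<in>{i<..n}. PB f (int j - int i) (lam' i - lam' j)) =
     (\<Prod>i\<in>{1..n}. \<Prod>j\<in>{i<..n}. PB f (int j - int i) (lam i - lam j)) *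
     ((\<Prod>i\<in>{1..<k}. PB f (int k - int i) (lam' i - lam' k) / PB f (int k - int i) (lam i - lam k)) *
      (\<Prod>j\<in>{k<..n}. PB f (int j - int k) (lam' k - lam' j) / PB f (int j - int k) (lam k - lam j)))"
    by (rule pair_change[OF k]) (use oth PB_nz[OF nz] in auto)
  have p1: "(\<Prod>i\<in>{1..<k}. PB f (int k - int i) (lam' i - lam' k) / PB f (int k - int i) (lam i - lam k))
     = (\<Prod>i\<in>{1..<k}. X powi (-2) * omegaB f (int i - int k) (lam k - lam i))"
  proof (intro prod.cong refl)
    fix i assume i: "i \<in> {1..<k}"
    hence li: "lam' i = lam i" using oth k by auto
    have "lam' k \<le> lam' i" using p' i k unfolding part_def by auto
    hence D: "0 \<le> lam i - lam k - 1" using li lk by simp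
    have "lam i - lam k = (lam i - lam k - 1) + 1" by simp
    hence "PB f (int k - int i) (lam i - lam k) = PB f (int k - int i) (lam i - lam k - 1) * omegaB f (int k - int i) (lam i - lam k - 1)"
      using PB_Suc[OF D] by metis
    moreover have e: "lam' i - lam' k = lam i - lam k - 1" using li lk by simp
    ultimately have "PB f (int k - int i) (lam' i - lam' k) / PB f (int k - int i) (lam i - lam k) =
        inverse (omegaB f (int k - int i) (lam i - lam k - 1))"
      unfolding e using PB_nz[OF nz] omegaB_nz[OF nz] by (simp add: field_simps)
    also have "\<dots> = X powi (-2) * omegaB f (- (int k - int i)) (- (lam i - lam k - 1) - 1)"
      by (rule omega_flip[OF Q X nz fl]) (use i D in auto)
    also have "- (int k - int i) = int i - int k" by simp
    also have "- (lam i - lam k - 1) - 1 = lam k - lam i" by simp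
    finally show "PB f (int k - int i) (lam' i - lam' k) / PB f (int k - int i) (lam i - lam k) =
        X powi (-2) * omegaB f (int i - int k) (lam k - lam i)" by simp
  qed
  have p2: "(\<Prod>j\<in>{k<..n}. PB f (int j - int k) (lam' k - lam' j) / PB f (int j - int k) (lam k - lam j))
     = (\<Prod>j\<in>{k<..n}. omegaB f (int j - int k) (lam k - lam j))"
  proof (intro prod.cong refl)
    fix j assume j: "j \<in> {k<..n}"
    hence lj: "lam' j = lam j" using oth k by auto
    have "lam j \<le> lam k" using p j k unfolding part_def by auto
    hence D: "0 \<le> lam k - lam j" by simp
    have "lam' k - lam' j = (lam k - lam j) + 1" using lj lk by simp
    thus "PB f (int j - int k) (lam' k - lam' j) / PB f (int j - int k) (lam k - lam j) = omegaB f (int j - int k) (lam k - lam j)"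
      using PB_Suc[OF D] PB_nz[OF nz] by simp
  qed
  have p1': "(\<Prod>i\<in>{1..<k}. X powi (-2) * omegaB f (int i - int k) (lam k - lam i)) =
     X powi (-2 * (int k - 1)) * (\<Prod>i\<in>{1..<k}. omegaB f (int i - int k) (lam k - lam i))"
  proof -
    have "(\<Prod>i\<in>{1..<k}. X powi (-2) * omegaB f (int i - int k) (lam k - lam i)) =
       (X powi (-2)) ^ (k - 1) * (\<Prod>i\<in>{1..<k}. omegaB f (int i - int k) (lam k - lam i))"
      by (simp add: prod.distrib)
    moreover have "(X powi (-2)) ^ (k - 1) = X powi (-2 * (int k - 1))"
    proof -
      have "(X powi (-2)) ^ (k - 1) = (X powi (-2)) powi (int (k - 1))" by (simp add: power_int_def)
      also have "\<dots> = X powi (-2 * int (k - 1))" by (rule power_int_mult[symmetric])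
      finally show ?thesis using k by (simp add: of_nat_diff)
    qed
    ultimately show ?thesis by simp
  qed
  have xx: "X powi (2 * (int k - 1)) * X powi (-2 * (int k - 1)) = 1"
  proof -
    have "X powi (2 * (int k - 1)) * X powi (-2 * (int k - 1)) = X powi (2 * (int k - 1) + -2 * (int k - 1))"
      by (rule power_int_add[symmetric]) (use X in simp)
    also have "2 * (int k - 1) + -2 * (int k - 1) = 0" by simp
    finally show ?thesis by simp
  qed
  have full: "(\<Prod>j\<in>{1..n}. omegaB f (int j - int k) (lam k - lam j)) =
     (\<Prod>i\<in>{1..<k}. omegaB f (int i - int k) (lam k - lam i)) * omegaB f 0 0 *
     (\<Prod>j\<in>{k<..n}. omegaB f (int j - int k) (lam k - lam j))"
    using split3[OF k, of "\<lambda>j. omegaB f (int j - int k) (lam k - lam j)"] by simp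
  have cz: "omegaB f 0 0 \<noteq> 0" using omegaB_nz[OF nz] .
  have canc: "\<And>P1 P2. P1 * omegaB f 0 0 * P2 / omegaB f 0 0 = P1 * P2"
    using cz by simp
  have "BN f Q X n N lam' = BN f Q X n N lam * (Q * (X powi (2 * (int k - 1)) * X powi (-2 * (int k - 1))) *
     ((\<Prod>i\<in>{1..<k}. omegaB f (int i - int k) (lam k - lam i)) * (\<Prod>j\<in>{k<..n}. omegaB f (int j - int k) (lam k - lam j))) *
     (f (lam k - int N) (1 - int k) / f (1 + lam k) (int n - int k)))"
    unfolding BN_def d d' q q' pc p1 p2 p1' by (simp only: mult_ac)
  also have "\<dots> = BN f Q X n N lam * RB f Q X n N lam k"
    unfolding RB_def full xx using cz by (simp add: mult_ac)
  finally show ?thesis .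
qed



lemma flip_dual:
  assumes Q: "Q \<noteq> 0" and X: "X \<noteq> 0" and fl: "flip_ok f Q X"
  shows "flip_ok (\<lambda>a b. f (- b) (- a)) (inverse X) (inverse Q)"
  unfolding flip_ok_def
proof (intro allI impI)
  fix a b :: int assume ab: "(a, b) \<noteq> (0, 0)"
  have "f b a = - mu Q X b a * f (- b) (- a)"
    by (rule flip_use[OF fl]) (use ab in auto)
  moreover have "mu (inverse X) (inverse Q) (- a) (- b) = mu Q X b a"
    unfolding mu_def by (simp add: power_int_inverse power_int_minus)
  ultimately show "f (- (- b)) (- (- a)) = - mu (inverse X) (inverse Q) (- a) (- b) * f (- b) (- a)"
    by simp
qed

lemma RB_alg:
  fixes f :: "int \<Rightarrow> int \<Rightarrow> complex" and L K n N :: int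
  assumes nz: "\<forall>a b. f a b \<noteq> 0" and Q: "Q \<noteq> 0" and X: "X \<noteq> 0"
    and h1: "f 0 (-1) = - inverse X * f 0 1" and h2: "f (-1) 0 = - inverse Q * f 1 0"
  shows "Q * (P * ((f (L - 0) (n - K + 1) * f (L + 1 - 0) (n - K)) / (f (L - N) (0 - K + 1) * f (L + 1 - N) (0 - K))))
           / omegaB f 0 0 * (f (L - N) (1 - K) / f (1 + L) (n - K))
       = inverse X * P / omegaB (\<lambda>a b. f (- b) (- a)) 0 0 *
           (f (- (1 - (L + 1))) (- ((K - 1) - n)) / f (- (N - (L + 1))) (- (1 + (K - 1))))"
proof -
  have o1: "omegaB (\<lambda>a b. f (- b) (- a)) 0 0 = f 0 (-1) * f (-1) 0 / (f 0 0 * f 1 (-1))"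
    by (simp add: omegaB_def)
  have o2: "omegaB f 0 0 = f 1 0 * f 0 1 / (f 0 0 * f 1 (-1))"
    by (simp add: omegaB_def)
  show ?thesis
    unfolding o1 o2 h1 h2
    apply (simp add: algebra_simps)
    using nz Q X apply (simp add: field_simps)
    done
qed

lemma RB_dual:
  assumes Q: "Q \<noteq> 0" and X: "X \<noteq> 0" and nz: "\<forall>a b. f a b \<noteq> 0" and fl: "flip_ok f Q X"
    and p: "part n N lam" and p': "part n N lam'" and k: "k \<in> {1..n}"
    and lk: "lam' k = lam k + 1" and oth: "\<forall>j\<in>{1..n}. j \<noteq> k \<longrightarrow> lam' j = lam j"
  defines "c \<equiv> nat (lam k + 1)"
  shows "RB f Q X n N lam k = RB (\<lambda>a b. f (- b) (- a)) (inverse X) (inverse Q) N n (cnj n lam) c"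
proof -
  note cs = cnj_step[OF p p' k lk oth, folded c_def]
  define g where "g = (\<lambda>a b. f (- b) (- a))"
  define Phi where "Phi a b = f (lam k - a) (b - int k + 1) * f (lam k + 1 - a) (b - int k)" for a b
  have Pnz: "\<forall>a b. Phi a b \<noteq> 0" using nz by (simp add: Phi_def)
  have bd: "(\<Prod>j\<in>{1..n}. Phi (lam j) (int j) / Phi (lam j) (int j - 1)) *
         (\<Prod>i\<in>{1..N}. Phi (int i - 1) (cnj n lam i) / Phi (int i) (cnj n lam i))
       = Phi 0 (int n) / Phi (int N) 0" by (rule boundary[OF p Pnz])
  have t1: "omegaB f (int j - int k) (lam k - lam j) = Phi (lam j) (int j) / Phi (lam j) (int j - 1)" for j
    unfolding omegaB_def Phi_def by (simp add: algebra_simps)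
  have t2: "omegaB g (int i - int c) (cnj n lam c - cnj n lam i) = inverse (Phi (int i - 1) (cnj n lam i) / Phi (int i) (cnj n lam i))" for i
    unfolding omegaB_def Phi_def g_def cs(1,3) by (simp add: algebra_simps)
  define P where "P = (\<Prod>i\<in>{1..N}. omegaB g (int i - int c) (cnj n lam c - cnj n lam i))"
  have P2: "P = inverse (\<Prod>i\<in>{1..N}. Phi (int i - 1) (cnj n lam i) / Phi (int i) (cnj n lam i))"
    unfolding P_def t2
    using prod_inversef[of "\<lambda>i. Phi (int i - 1) (cnj n lam i) / Phi (int i) (cnj n lam i)" "{1..N}"] by (simp add: comp_def)
  have s1: "(\<Prod>j\<in>{1..n}. omegaB f (int j - int k) (lam k - lam j)) = P * (Phi 0 (int n) / Phi (int N) 0)"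
    unfolding t1 P2 using bd Pnz by (simp add: field_simps)
  have h1: "f 0 (-1) = - inverse X * f 0 1"
    using flip_use[OF fl, of 0 0 "-1" 1] by (simp add: mu_def power_int_minus)
  have h2: "f (-1) 0 = - inverse Q * f 1 0"
    using flip_use[OF fl, of "-1" 1 0 0] by (simp add: mu_def power_int_minus)
  have "RB f Q X n N lam k = Q * (P * ((f (lam k - 0) (int n - int k + 1) * f (lam k + 1 - 0) (int n - int k)) /
       (f (lam k - int N) (0 - int k + 1) * f (lam k + 1 - int N) (0 - int k))))
           / omegaB f 0 0 * (f (lam k - int N) (1 - int k) / f (1 + lam k) (int n - int k))"
    unfolding RB_def s1 Phi_def by (simp only: mult.assoc)
  also have "\<dots> = inverse X * P / omegaB (\<lambda>a b. f (- b) (- a)) 0 0 *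
           (f (- (1 - (lam k + 1))) (- ((int k - 1) - int n)) / f (- (int N - (lam k + 1))) (- (1 + (int k - 1))))"
    by (rule RB_alg[OF nz Q X h1 h2])
  also have "\<dots> = RB g (inverse X) (inverse Q) N n (cnj n lam) c"
    unfolding RB_def unfolding P_def[symmetric] unfolding cs(1,3) g_def by (rule refl)
  finally show ?thesis unfolding g_def .
qed

lemma BN_zero:
  assumes z: "\<forall>i\<in>{1..n}. lam i = 0"
  shows "BN f Q X n N lam = 1"
proof -
  have "(\<Prod>i\<in>{1..n}. Q powi lam i * X powi (2 * (int i - 1) * lam i)) = 1"
    using z by (intro prod.neutral) auto
  moreover have "(\<Prod>i\<in>{1..n}. \<Prod>j\<in>{i<..n}. PB f (int j - int i) (lam i - lam j)) = 1"
    using z by (intro prod.neutral) (auto intro!: prod.neutral simp: PB_def)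
  moreover have "(\<Prod>j\<in>{1..n}. QB f n N j (lam j)) = 1"
    using z by (intro prod.neutral) (auto simp: QB_def)
  ultimately show ?thesis by (simp add: BN_def)
qed

theorem BN_dual:
  assumes Q: "Q \<noteq> 0" and X: "X \<noteq> 0" and nz: "\<forall>a b. f a b \<noteq> 0" and fl: "flip_ok f Q X"
    and p: "part n N lam"
  shows "BN f Q X n N lam = BN (\<lambda>a b. f (- b) (- a)) (inverse X) (inverse Q) N n (cnj n lam)"
  using p
proof (induction rule: part_induct)
  case (base lam)
  have "\<forall>i\<in>{1..N}. cnj n lam i = 0" using base cnj_zero by auto
  hence "BN (\<lambda>a b. f (- b) (- a)) (inverse X) (inverse Q) N n (cnj n lam) = 1" by (intro BN_zero) auto
  thus ?case using BN_zero[OF base(2)] by simp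
next
  case (step lam lam' k)
  define c where "c = nat (lam k + 1)"
  note cs = cnj_step[OF step(1-5), folded c_def]
  have nz': "\<forall>a b. (\<lambda>a b. f (- b) (- a)) a b \<noteq> 0" using nz by simp
  have "BN (\<lambda>a b. f (- b) (- a)) (inverse X) (inverse Q) N n (cnj n lam') =
      BN (\<lambda>a b. f (- b) (- a)) (inverse X) (inverse Q) N n (cnj n lam) * RB (\<lambda>a b. f (- b) (- a)) (inverse X) (inverse Q) N n (cnj n lam) c"
    by (rule BN_step[OF _ _ nz' flip_dual[OF Q X fl] part_cnj[OF step(1)] part_cnj[OF step(2)]]) (use cs Q X in auto)
  moreover have "BN f Q X n N lam' = BN f Q X n N lam * RB f Q X n N lam k" by (rule BN_step[OF Q X nz fl step(1-5)])
  moreover have "RB f Q X n N lam k = RB (\<lambda>a b. f (- b) (- a)) (inverse X) (inverse Q) N n (cnj n lam) c"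
    unfolding c_def by (rule RB_dual[OF Q X nz fl step(1-5)])
  ultimately show ?case using step(6) by simp
qed



lemma PA_expand:
  assumes nz: "\<forall>a b. f a b \<noteq> 0"
  shows "PA f u (int m) = f (int m) (2 - u) / f 0 (2 - u) *
           ((\<Prod>t<m. f (int t) (3 - u)) / (\<Prod>t<m. f (int t + 1) (1 - u)))"
proof (induction m)
  case 0 thus ?case using nz by (simp add: PA_def)
next
  case (Suc m)
  have "PA f u (int (Suc m)) = PA f u (int m) * chiA f u (int m)"
    using PA_Suc[of "int m" f u] by (simp add: add.commute)
  thus ?case using Suc nz by (simp add: chiA_def field_simps)
qed

lemma PB_expand:
  assumes nz: "\<forall>a b. f a b \<noteq> 0"
  shows "PB f u (int m) = f (int m) u / f 0 u *
           ((\<Prod>t<m. f (int t) (u + 1)) / (\<Prod>t<m. f (int t + 1) (u - 1)))"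
proof (induction m)
  case 0 thus ?case using nz by (simp add: PB_def)
next
  case (Suc m)
  have "PB f u (int (Suc m)) = PB f u (int m) * omegaB f u (int m)"
    using PB_Suc[of "int m" f u] by (simp add: add.commute)
  thus ?case using Suc nz by (simp add: omegaB_def field_simps)
qed

lemma qpoch_nat: "0 \<le> k \<Longrightarrow> qpoch p y Q k = (\<Prod>t<nat k. E p (y * Q ^ t))"
  by (simp add: qpoch_def)

lemma powi_nat_add: "(q::complex) powi (int t + int m) = q ^ t * q ^ m"
  by (metis of_nat_add power_add power_int_of_nat)

lemma powi_int_add: "(x::complex) \<noteq> 0 \<Longrightarrow> x powi (u + v) = x powi u * x powi v"
  by (simp add: power_int_add)

lemma A_conv:
  assumes q: "q \<noteq> 0" and x: "x \<noteq> 0" and len: "length l = n"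
    and nn: "\<forall>i<n. 0 \<le> l ! i" and gen: "\<forall>k m. E p (a * q powi k * x powi m) \<noteq> 0"
  shows "A p a q x n N l = AN (\<lambda>k m. E p (a * q powi k * x powi m)) n N (\<lambda>i. l ! (i - 1))"
proof -
  define f where "f = (\<lambda>k m. E p (a * q powi k * x powi m))"
  define L where "L = (\<lambda>i. l ! (i - 1))"
  have nz: "\<forall>a b. f a b \<noteq> 0" using gen by (simp add: f_def)
  have L0: "\<And>i. i \<in> {1..n} \<Longrightarrow> 0 \<le> L i" using nn unfolding L_def by (metis atLeastAtMost_iff diff_less le_less_trans less_numeral_extra(1) not_less zero_less_iff_neq_zero order.strict_trans1)
  have part1: "(\<Prod>i\<in>{1..n}. \<Prod>j\<in>{i..n}. E p (a * x powi (2 - int i - int j) * q powi (L i + L j)) / E p (a * x powi (2 - int i - int j)))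
     = (\<Prod>i\<in>{1..n}. f (2 * L i) (2 - 2 * int i) / f 0 (2 - 2 * int i)) *
       (\<Prod>i\<in>{1..n}. \<Prod>j\<in>{i<..n}. f (L i + L j) (2 - int i - int j) / f 0 (2 - int i - int j))"
  proof -
    have "(\<Prod>i\<in>{1..n}. \<Prod>j\<in>{i..n}. E p (a * x powi (2 - int i - int j) * q powi (L i + L j)) / E p (a * x powi (2 - int i - int j)))
      = (\<Prod>i\<in>{1..n}. f (2 * L i) (2 - 2 * int i) / f 0 (2 - 2 * int i) *
          (\<Prod>j\<in>{i<..n}. f (L i + L j) (2 - int i - int j) / f 0 (2 - int i - int j)))"
    proof (intro prod.cong refl)
      fix i assume i: "i \<in> {1..n}"
      have "{i..n} = insert i {i<..n}" using i by auto
      hence "(\<Prod>j\<in>{i..n}. E p (a * x powi (2 - int i - int j) * q powi (L i + L j)) / E p (a * x powi (2 - int i - int j)))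
         = f (L i + L i) (2 - int i - int i) / f 0 (2 - int i - int i) *
           (\<Prod>j\<in>{i<..n}. f (L i + L j) (2 - int i - int j) / f 0 (2 - int i - int j))"
        by (simp add: f_def mult_ac)
      moreover have "L i + L i = 2 * L i" "2 - int i - int i = 2 - 2 * int i" by simp_all
      ultimately show "(\<Prod>j\<in>{i..n}. E p (a * x powi (2 - int i - int j) * q powi (L i + L j)) / E p (a * x powi (2 - int i - int j)))
         = f (2 * L i) (2 - 2 * int i) / f 0 (2 - 2 * int i) *
           (\<Prod>j\<in>{i<..n}. f (L i + L j) (2 - int i - int j) / f 0 (2 - int i - int j))" by simp
    qed
    thus ?thesis by (simp only: prod.distrib)
  qed
  have part2: "(\<Prod>i\<in>{1..n}. \<Prod>j\<in>{i<..n}.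
          qpoch p (a * x powi (3 - int i - int j)) q (L i + L j)
          / qpoch p (a * q * x powi (1 - int i - int j)) q (L i + L j))
     = (\<Prod>i\<in>{1..n}. \<Prod>j\<in>{i<..n}.
          (\<Prod>t<nat (L i + L j). f (int t) (3 - (int i + int j))) / (\<Prod>t<nat (L i + L j). f (int t + 1) (1 - (int i + int j))))"
  proof (intro prod.cong refl)
    fix i j assume i: "i \<in> {1..n}" and j: "j \<in> {i<..n}"
    have S: "0 \<le> L i + L j" using L0[OF i] L0[of j] j i by auto
    have n1: "qpoch p (a * x powi (3 - int i - int j)) q (L i + L j) = (\<Prod>t<nat (L i + L j). f (int t) (3 - (int i + int j)))"
      unfolding qpoch_nat[OF S] by (intro prod.cong refl) (simp add: f_def mult_ac algebra_simps)
    have n2: "qpoch p (a * q * x powi (1 - int i - int j)) q (L i + L j) = (\<Prod>t<nat (L i + L j). f (int t + 1) (1 - (int i + int j)))"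
      unfolding qpoch_nat[OF S]
    proof (intro prod.cong refl)
      fix t
      have "q powi (int t + 1) = q ^ t * q ^ 1" using powi_nat_add[of q t 1] by simp
      thus "E p (a * q * x powi (1 - int i - int j) * q ^ t) = f (int t + 1) (1 - (int i + int j))"
        by (simp add: f_def mult_ac algebra_simps)
    qed
    show "qpoch p (a * x powi (3 - int i - int j)) q (L i + L j) / qpoch p (a * q * x powi (1 - int i - int j)) q (L i + L j) =
      (\<Prod>t<nat (L i + L j). f (int t) (3 - (int i + int j))) / (\<Prod>t<nat (L i + L j). f (int t + 1) (1 - (int i + int j)))"
      unfolding n1 n2 ..
  qed
  have part12: "(\<Prod>i\<in>{1..n}. \<Prod>j\<in>{i<..n}. f (L i + L j) (2 - int i - int j) / f 0 (2 - int i - int j)) *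
      (\<Prod>i\<in>{1..n}. \<Prod>j\<in>{i<..n}.
          (\<Prod>t<nat (L i + L j). f (int t) (3 - (int i + int j))) / (\<Prod>t<nat (L i + L j). f (int t + 1) (1 - (int i + int j))))
     = (\<Prod>i\<in>{1..n}. \<Prod>j\<in>{i<..n}. PA f (int i + int j) (L i + L j))"
  proof -
    have "(\<Prod>i\<in>{1..n}. \<Prod>j\<in>{i<..n}. PA f (int i + int j) (L i + L j)) =
      (\<Prod>i\<in>{1..n}. \<Prod>j\<in>{i<..n}. f (L i + L j) (2 - int i - int j) / f 0 (2 - int i - int j) *
          ((\<Prod>t<nat (L i + L j). f (int t) (3 - (int i + int j))) / (\<Prod>t<nat (L i + L j). f (int t + 1) (1 - (int i + int j)))))"
    proof (intro prod.cong refl)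
      fix i j assume i: "i \<in> {1..n}" and j: "j \<in> {i<..n}"
      have S: "0 \<le> L i + L j" using L0[OF i] L0[of j] j i by auto
      hence "L i + L j = int (nat (L i + L j))" by simp
      hence "PA f (int i + int j) (L i + L j) = PA f (int i + int j) (int (nat (L i + L j)))" by metis
      also have "\<dots> = f (int (nat (L i + L j))) (2 - (int i + int j)) / f 0 (2 - (int i + int j)) *
           ((\<Prod>t<nat (L i + L j). f (int t) (3 - (int i + int j))) / (\<Prod>t<nat (L i + L j). f (int t + 1) (1 - (int i + int j))))"
        by (rule PA_expand[OF nz])
      finally show "PA f (int i + int j) (L i + L j) = f (L i + L j) (2 - int i - int j) / f 0 (2 - int i - int j) *
          ((\<Prod>t<nat (L i + L j). f (int t) (3 - (int i + int j))) / (\<Prod>t<nat (L i + L j). f (int t + 1) (1 - (int i + int j))))"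
        using S by (simp add: algebra_simps)
    qed
    thus ?thesis by (simp only: prod.distrib)
  qed
  have part3: "qpochL p (a * x powi (1 - int n)) q x l / qpochL p (a * q ^ (N + 1)) q x l = (\<Prod>j\<in>{1..n}. QA f n N j (L j))"
  proof -
    have "qpochL p (a * x powi (1 - int n)) q x l = (\<Prod>j\<in>{1..n}. \<Prod>t<nat (L j). f (int t) (2 - int n - int j))"
      unfolding qpochL_def len L_def
    proof (intro prod.cong refl)
      fix j assume j: "j \<in> {1..n}"
      have S: "0 \<le> l ! (j - 1)" using L0[OF j] by (simp add: L_def)
      show "qpoch p (a * x powi (1 - int n) * x powi (1 - int j)) q (l ! (j - 1)) = (\<Prod>t<nat (l ! (j - 1)). f (int t) (2 - int n - int j))"
        unfolding qpoch_nat[OF S]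
      proof (intro prod.cong refl)
        fix t
        have "x powi (2 - int n - int j) = x powi (1 - int n) * x powi (1 - int j)"
          using powi_int_add[OF x, of "1 - int n" "1 - int j"] by (simp add: algebra_simps)
        thus "E p (a * x powi (1 - int n) * x powi (1 - int j) * q ^ t) = f (int t) (2 - int n - int j)"
          by (simp add: f_def mult_ac)
      qed
    qed
    moreover have "qpochL p (a * q ^ (N + 1)) q x l = (\<Prod>j\<in>{1..n}. \<Prod>t<nat (L j). f (int N + 1 + int t) (1 - int j))"
      unfolding qpochL_def len L_def
    proof (intro prod.cong refl)
      fix j assume j: "j \<in> {1..n}"
      have S: "0 \<le> l ! (j - 1)" using L0[OF j] by (simp add: L_def)
      show "qpoch p (a * q ^ (N + 1) * x powi (1 - int j)) q (l ! (j - 1)) = (\<Prod>t<nat (l ! (j - 1)). f (int N + 1 + int t) (1 - int j))"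
        unfolding qpoch_nat[OF S]
      proof (intro prod.cong refl)
        fix t
        have "q powi (int N + 1 + int t) = q ^ (N + 1) * q ^ t"
          using powi_nat_add[of q "N + 1" t] by (simp add: algebra_simps)
        thus "E p (a * q ^ (N + 1) * x powi (1 - int j) * q ^ t) = f (int N + 1 + int t) (1 - int j)"
          by (simp add: f_def mult_ac)
      qed
    qed
    ultimately show ?thesis
      by (simp add: QA_def prod_dividef)
  qed
  have "A p a q x n N l =
      ((\<Prod>i\<in>{1..n}. f (2 * L i) (2 - 2 * int i) / f 0 (2 - 2 * int i)) *
       (\<Prod>i\<in>{1..n}. \<Prod>j\<in>{i<..n}. f (L i + L j) (2 - int i - int j) / f 0 (2 - int i - int j))) *
      (\<Prod>i\<in>{1..n}. \<Prod>j\<in>{i<..n}.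
          (\<Prod>t<nat (L i + L j). f (int t) (3 - (int i + int j))) / (\<Prod>t<nat (L i + L j). f (int t + 1) (1 - (int i + int j)))) *
      (\<Prod>j\<in>{1..n}. QA f n N j (L j))"
    unfolding A_def Let_def L_def[symmetric] part1[symmetric] part2[symmetric] part3[symmetric] ..
  also have "\<dots> = AN f n N L"
    unfolding AN_def part12[symmetric] by (simp only: mult.assoc)
  finally show ?thesis unfolding f_def L_def .
qed

lemma B_conv:
  assumes q: "q \<noteq> 0" and x: "x \<noteq> 0" and n1: "1 \<le> n" and len: "length l = n"
    and bnd: "\<forall>i<n. 0 \<le> l ! i \<and> l ! i \<le> int N"
    and mono: "\<forall>i j. i \<le> j \<longrightarrow> j < n \<longrightarrow> l ! j \<le> l ! i"
    and gen: "\<forall>k m. (k, m) \<noteq> (0, 0) \<longrightarrow> E p (q powi k * x powi m) \<noteq> 0"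
  shows "B p q x n N l = BN (\<lambda>k m. if k = 0 \<and> m = 0 then 1 else E p (q powi k * x powi m)) q x n N (\<lambda>i. l ! (i - 1))"
proof -
  define f where "f = (\<lambda>k m. if k = 0 \<and> m = 0 then 1 else E p (q powi k * x powi m))"
  define L where "L = (\<lambda>i. l ! (i - 1))"
  have fE: "\<And>k m. (k, m) \<noteq> (0, 0) \<Longrightarrow> f k m = E p (q powi k * x powi m)" by (auto simp: f_def)
  have fnz: "\<forall>a b. f a b \<noteq> 0" using gen by (auto simp: f_def)
  have L0: "\<And>i. i \<in> {1..n} \<Longrightarrow> 0 \<le> L i \<and> L i \<le> int N"
  proof -
    fix i assume "i \<in> {1..n}" hence "i - 1 < n" by auto
    thus "0 \<le> L i \<and> L i \<le> int N" using bnd by (simp add: L_def)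
  qed
  have Lm: "\<And>i j. i \<in> {1..n} \<Longrightarrow> j \<in> {i<..n} \<Longrightarrow> L j \<le> L i"
  proof -
    fix i j assume "i \<in> {1..n}" "j \<in> {i<..n}"
    hence "i - 1 \<le> j - 1" "j - 1 < n" by auto
    thus "L j \<le> L i" using mono by (simp add: L_def)
  qed
  have part2: "(\<Prod>i\<in>{1..n}. \<Prod>j\<in>{i<..n}.
          (E p (x powi (int j - int i) * q powi (L i - L j)) / E p (x powi (int j - int i)))
          * (qpoch p (x powi (int j - int i + 1)) q (L i - L j)
             / qpoch p (q * x powi (int j - int i - 1)) q (L i - L j)))
     = (\<Prod>i\<in>{1..n}. \<Prod>j\<in>{i<..n}. PB f (int j - int i) (L i - L j))"
  proof (intro prod.cong refl)
    fix i j assume i: "i \<in> {1..n}" and j: "j \<in> {i<..n}"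
    have S: "0 \<le> L i - L j" using Lm[OF i j] by simp
    have u: "int j - int i \<noteq> 0" using j by auto
    have n1: "qpoch p (x powi (int j - int i + 1)) q (L i - L j) = (\<Prod>t<nat (L i - L j). f (int t) (int j - int i + 1))"
      unfolding qpoch_nat[OF S]
    proof (intro prod.cong refl)
      fix t
      have "(int t, int j - int i + 1) \<noteq> (0, 0)" using j by auto
      thus "E p (x powi (int j - int i + 1) * q ^ t) = f (int t) (int j - int i + 1)"
        by (simp add: fE mult_ac)
    qed
    have n2: "qpoch p (q * x powi (int j - int i - 1)) q (L i - L j) = (\<Prod>t<nat (L i - L j). f (int t + 1) (int j - int i - 1))"
      unfolding qpoch_nat[OF S]
    proof (intro prod.cong refl)
      fix t
      have "(int t + 1, int j - int i - 1) \<noteq> (0, 0)" by auto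
      moreover have "q powi (int t + 1) = q ^ t * q ^ 1" using powi_nat_add[of q t 1] by simp
      ultimately show "E p (q * x powi (int j - int i - 1) * q ^ t) = f (int t + 1) (int j - int i - 1)"
        by (simp add: fE mult_ac)
    qed
    have e1: "E p (x powi (int j - int i) * q powi (L i - L j)) = f (L i - L j) (int j - int i)"
      using u by (simp add: fE mult_ac)
    have e2: "E p (x powi (int j - int i)) = f 0 (int j - int i)"
      using u by (simp add: fE)
    have "L i - L j = int (nat (L i - L j))" using S by simp
    hence "PB f (int j - int i) (L i - L j) = PB f (int j - int i) (int (nat (L i - L j)))" by metis
    also have "\<dots> = f (int (nat (L i - L j))) (int j - int i) / f 0 (int j - int i) *
           ((\<Prod>t<nat (L i - L j). f (int t) (int j - int i + 1)) / (\<Prod>t<nat (L i - L j). f (int t + 1) (int j - int i - 1)))"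
      by (rule PB_expand[OF fnz])
    finally show "(E p (x powi (int j - int i) * q powi (L i - L j)) / E p (x powi (int j - int i)))
          * (qpoch p (x powi (int j - int i + 1)) q (L i - L j)
             / qpoch p (q * x powi (int j - int i - 1)) q (L i - L j)) = PB f (int j - int i) (L i - L j)"
      unfolding e1 e2 n1 n2 using S by simp
  qed
  have part3: "qpochL p (q powi (- int N)) q x l / qpochL p (q * x ^ (n - 1)) q x l = (\<Prod>j\<in>{1..n}. QB f n N j (L j))"
  proof -
    have "qpochL p (q powi (- int N)) q x l = (\<Prod>j\<in>{1..n}. \<Prod>t<nat (L j). f (int t - int N) (1 - int j))"
      unfolding qpochL_def len L_def
    proof (intro prod.cong refl)
      fix j assume j: "j \<in> {1..n}"
      have S: "0 \<le> l ! (j - 1)" using L0[OF j] by (simp add: L_def)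
      show "qpoch p (q powi (- int N) * x powi (1 - int j)) q (l ! (j - 1)) = (\<Prod>t<nat (l ! (j - 1)). f (int t - int N) (1 - int j))"
        unfolding qpoch_nat[OF S]
      proof (intro prod.cong refl)
        fix t assume t: "t \<in> {..<nat (l ! (j - 1))}"
        have "l ! (j - 1) \<le> int N" using L0[OF j] by (simp add: L_def)
        hence "int t < int N" using t by auto
        hence ne: "(int t - int N, 1 - int j) \<noteq> (0, 0)" by auto
        have "q powi (int t - int N) = q powi (- int N) * q powi (int t)"
          using powi_int_add[OF q, of "- int N" "int t"] by (simp add: algebra_simps)
        thus "E p (q powi (- int N) * x powi (1 - int j) * q ^ t) = f (int t - int N) (1 - int j)"
          using ne by (simp add: fE mult_ac)
      qed
    qed
    moreover have "qpochL p (q * x ^ (n - 1)) q x l = (\<Prod>j\<in>{1..n}. \<Prod>t<nat (L j). f (1 + int t) (int n - int j))"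
      unfolding qpochL_def len L_def
    proof (intro prod.cong refl)
      fix j assume j: "j \<in> {1..n}"
      have S: "0 \<le> l ! (j - 1)" using L0[OF j] by (simp add: L_def)
      show "qpoch p (q * x ^ (n - 1) * x powi (1 - int j)) q (l ! (j - 1)) = (\<Prod>t<nat (l ! (j - 1)). f (1 + int t) (int n - int j))"
        unfolding qpoch_nat[OF S]
      proof (intro prod.cong refl)
        fix t
        have ne: "(1 + int t, int n - int j) \<noteq> (0, 0)" by auto
        have "x powi (int n - int j) = x powi (int (n - 1)) * x powi (1 - int j)"
          using powi_int_add[OF x, of "int (n - 1)" "1 - int j"] n1 by (simp add: algebra_simps of_nat_diff)
        moreover have "q powi (1 + int t) = q ^ 1 * q ^ t" using powi_nat_add[of q 1 t] by simp
        ultimately show "E p (q * x ^ (n - 1) * x powi (1 - int j) * q ^ t) = f (1 + int t) (int n - int j)"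
          using ne by (simp add: fE mult_ac)
      qed
    qed
    ultimately show ?thesis
      by (simp add: QB_def prod_dividef)
  qed
  have "B p q x n N l =
      (\<Prod>i\<in>{1..n}. q powi (L i) * x powi (2 * (int i - 1) * L i)) *
      (\<Prod>i\<in>{1..n}. \<Prod>j\<in>{i<..n}. PB f (int j - int i) (L i - L j)) *
      (\<Prod>j\<in>{1..n}. QB f n N j (L j))"
    unfolding B_def Let_def L_def[symmetric] part2[symmetric] part3[symmetric] ..
  also have "\<dots> = BN f q x n N L"
    unfolding BN_def ..
  finally show ?thesis unfolding f_def L_def .
qed



lemma AN_cong:
  assumes "\<forall>i\<in>{1..n}. lam i = lam' i"
  shows "AN f n N lam = AN f n N lam'"
proof -
  have "(\<Prod>i\<in>{1..n}. f (2 * lam i) (2 - 2 * int i) / f 0 (2 - 2 * int i)) =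
        (\<Prod>i\<in>{1..n}. f (2 * lam' i) (2 - 2 * int i) / f 0 (2 - 2 * int i))"
    using assms by (intro prod.cong) auto
  moreover have "(\<Prod>i\<in>{1..n}. \<Prod>j\<in>{i<..n}. PA f (int i + int j) (lam i + lam j)) =
        (\<Prod>i\<in>{1..n}. \<Prod>j\<in>{i<..n}. PA f (int i + int j) (lam' i + lam' j))"
    using assms by (intro prod.cong refl) auto
  moreover have "(\<Prod>j\<in>{1..n}. QA f n N j (lam j)) = (\<Prod>j\<in>{1..n}. QA f n N j (lam' j))"
    using assms by (intro prod.cong) auto
  ultimately show ?thesis unfolding AN_def by simp
qed

lemma BN_cong:
  assumes "\<forall>i\<in>{1..n}. lam i = lam' i"
  shows "BN f Q X n N lam = BN f Q X n N lam'"
proof -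
  have "(\<Prod>i\<in>{1..n}. Q powi lam i * X powi (2 * (int i - 1) * lam i)) =
        (\<Prod>i\<in>{1..n}. Q powi lam' i * X powi (2 * (int i - 1) * lam' i))"
    using assms by (intro prod.cong) auto
  moreover have "(\<Prod>i\<in>{1..n}. \<Prod>j\<in>{i<..n}. PB f (int j - int i) (lam i - lam j)) =
        (\<Prod>i\<in>{1..n}. \<Prod>j\<in>{i<..n}. PB f (int j - int i) (lam' i - lam' j))"
    using assms by (intro prod.cong refl) auto
  moreover have "(\<Prod>j\<in>{1..n}. QB f n N j (lam j)) = (\<Prod>j\<in>{1..n}. QB f n N j (lam' j))"
    using assms by (intro prod.cong) auto
  ultimately show ?thesis unfolding BN_def by simp
qed

lemma conjp_len: "length (conjp N l) = N"
  by (simp add: conjp_def)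

lemma conjp_nth:
  assumes "i \<in> {1..N}"
  shows "conjp N l ! (i - 1) = cnj (length l) (\<lambda>j. l ! (j - 1)) i"
proof -
  have l: "i - 1 < length [1..<N+1]" using assms by auto
  have "conjp N l ! (i - 1) = (\<lambda>j. int (card {i'. i' < length l \<and> int j \<le> l ! i'})) ([1..<N+1] ! (i - 1))"
    unfolding conjp_def by (rule nth_map[OF l])
  moreover have "[1..<N+1] ! (i - 1) = i" using assms by (simp del: upt_Suc add: nth_upt)
  ultimately have "conjp N l ! (i - 1) = int (card {i'. i' < length l \<and> int i \<le> l ! i'})"
    by simp
  moreover have "{j\<in>{1..length l}. int i \<le> l ! (j - 1)} = Suc ` {i'. i' < length l \<and> int i \<le> l ! i'}"
  proof (intro set_eqI iffI)
    fix j assume "j \<in> {j\<in>{1..length l}. int i \<le> l ! (j - 1)}"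
    thus "j \<in> Suc ` {i'. i' < length l \<and> int i \<le> l ! i'}"
      by (intro image_eqI[of _ _ "j - 1"]) auto
  qed auto
  moreover have "card (Suc ` {i'. i' < length l \<and> int i \<le> l ! i'}) = card {i'. i' < length l \<and> int i \<le> l ! i'}"
    by (rule card_image) simp
  ultimately show ?thesis by (simp add: cnj_def)
qed

lemma powi_inv: "(inverse (x::complex)) powi k = x powi (- k)"
  by (simp add: power_int_inverse power_int_minus)

theorem mainTheorem3:
  fixes p a q x :: complex and n N :: nat and l :: "int list"
  assumes "norm p < 1" and "n \<ge> 1"
    and "a \<noteq> 0" and "q \<noteq> 0" and "x \<noteq> 0"
    and generic1: "\<And>k m :: int. E p (a * q powi k * x powi m) \<noteq> 0"
    and generic2: "\<And>k m :: int. (k, m) \<noteq> (0, 0) \<Longrightarrow> E p (q powi k * x powi m) \<noteq> 0"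
    and "l \<in> Lambda n N"
  shows "A p a q x n N l = A p (a * q * x) (inverse x) (inverse q) N n (conjp N l)
       \<and> B p q x n N l = B p (inverse x) (inverse q) N n (conjp N l)"
proof -
  note pp = assms(1) and n1 = assms(2) and a0 = assms(3) and q0 = assms(4) and x0 = assms(5)
  define L where "L = (\<lambda>i. l ! (i - 1))"
  define l' where "l' = conjp N l"
  define L' where "L' = (\<lambda>i. l' ! (i - 1))"
  have len: "length l = n" and bnd: "\<forall>i<n. 0 \<le> l ! i \<and> l ! i \<le> int N"
    and mono: "\<forall>i j. i \<le> j \<longrightarrow> j < n \<longrightarrow> l ! j \<le> l ! i"
    using assms(8) unfolding Lambda_def by auto
  have pL: "part n N L" unfolding part_def L_def
  proof (intro conjI allI impI ballI)
    fix i assume "i \<in> {1..n}" hence "i - 1 < n" by auto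
    thus "0 \<le> l ! (i - 1)" "l ! (i - 1) \<le> int N" using bnd by auto
  next
    fix i j assume "1 \<le> i" "i \<le> j" "j \<le> n"
    thus "l ! (j - 1) \<le> l ! (i - 1)" using mono by auto
  qed
  have len': "length l' = N" by (simp add: l'_def conjp_len)
  have agree: "\<forall>i\<in>{1..N}. cnj n L i = L' i"
    using conjp_nth[of _ N l] len unfolding L'_def l'_def L_def by auto
  have pL': "part N n L'"
  proof -
    have pc: "part N n (cnj n L)" by (rule part_cnj[OF pL])
    show ?thesis unfolding part_def
    proof (intro conjI allI impI ballI)
      fix i assume "i \<in> {1..N}"
      thus "0 \<le> L' i" "L' i \<le> int n" using pc agree unfolding part_def by auto
    next
      fix i j assume "1 \<le> i" "i \<le> j" "j \<le> N"
      thus "L' j \<le> L' i" using pc agree unfolding part_def by (metis atLeastAtMost_iff order.trans)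
    qed
  qed
  have bnd': "\<forall>i<N. 0 \<le> l' ! i \<and> l' ! i \<le> int n"
  proof (intro allI impI)
    fix i assume "i < N"
    hence "Suc i \<in> {1..N}" by auto
    thus "0 \<le> l' ! i \<and> l' ! i \<le> int n" using pL' unfolding part_def L'_def by fastforce
  qed
  have mono': "\<forall>i j. i \<le> j \<longrightarrow> j < N \<longrightarrow> l' ! j \<le> l' ! i"
  proof (intro allI impI)
    fix i j assume "i \<le> j" "j < N"
    hence "L' (Suc j) \<le> L' (Suc i)" using pL' unfolding part_def by auto
    thus "l' ! j \<le> l' ! i" by (simp add: L'_def)
  qed
  define f where "f = (\<lambda>k m. E p (a * q powi k * x powi m))"
  have fnz: "\<forall>a b. f a b \<noteq> 0" using generic1 by (simp add: f_def)
  have f2: "(\<lambda>k m. E p (a * q * x * inverse x powi k * inverse q powi m)) = (\<lambda>k m. f (1 - m) (1 - k))"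
  proof (intro ext)
    fix k m :: int
    have "q powi (1 - m) = q * q powi (- m)" using powi_int_add[OF q0, of 1 "- m"] by simp
    moreover have "x powi (1 - k) = x * x powi (- k)" using powi_int_add[OF x0, of 1 "- k"] by simp
    ultimately show "E p (a * q * x * inverse x powi k * inverse q powi m) = f (1 - m) (1 - k)"
      by (simp add: f_def powi_inv mult_ac)
  qed
  have gen2: "\<forall>k m. E p (a * q * x * inverse x powi k * inverse q powi m) \<noteq> 0"
  proof (intro allI)
    fix k m :: int
    have "E p (a * q * x * inverse x powi k * inverse q powi m) = f (1 - m) (1 - k)"
      using fun_cong[OF fun_cong[OF f2, of k], of m] by simp
    thus "E p (a * q * x * inverse x powi k * inverse q powi m) \<noteq> 0" using fnz by simp
  qed
  have A1: "A p a q x n N l = AN f n N L"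
    unfolding f_def L_def by (rule A_conv[OF q0 x0 len]) (use bnd generic1 in auto)
  have A2: "A p (a * q * x) (inverse x) (inverse q) N n l' = AN (\<lambda>k m. f (1 - m) (1 - k)) N n L'"
    unfolding L'_def f2[symmetric]
    by (rule A_conv[OF _ _ len']) (use bnd' gen2 q0 x0 in auto)
  have partA: "A p a q x n N l = A p (a * q * x) (inverse x) (inverse q) N n l'"
    unfolding A1 A2 AN_dual[OF fnz pL] by (rule AN_cong[OF agree])
  define g where "g = (\<lambda>k m. if k = 0 \<and> m = 0 then 1 else E p (q powi k * x powi m))"
  have gnz: "\<forall>a b. g a b \<noteq> 0" using generic2 by (auto simp: g_def)
  have gfl: "flip_ok g q x"
    unfolding flip_ok_def
  proof (intro allI impI)
    fix a b :: int assume ab: "(a, b) \<noteq> (0, 0)"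
    define y where "y = q powi a * x powi b"
    have y0: "y \<noteq> 0" using q0 x0 by (simp add: y_def)
    have "q powi (- a) * x powi (- b) = inverse y" by (simp add: y_def power_int_minus)
    hence "g (- a) (- b) = E p (inverse y)" using ab by (auto simp: g_def)
    also have "\<dots> = - E p y / y" by (rule E_inv[OF pp y0])
    also have "\<dots> = - mu q x (- a) (- b) * g a b"
      using ab y0 by (auto simp: g_def mu_def y_def power_int_minus field_simps)
    finally show "g (- a) (- b) = - mu q x (- a) (- b) * g a b" .
  qed
  have B1: "B p q x n N l = BN g q x n N L"
    unfolding g_def L_def by (rule B_conv[OF q0 x0 n1 len bnd mono]) (use generic2 in auto)
  have g2: "(\<lambda>k m. if k = 0 \<and> m = 0 then 1 else E p (inverse x powi k * inverse q powi m)) = (\<lambda>k m. g (- m) (- k))"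
    by (intro ext) (auto simp: g_def powi_inv mult_ac)
  have B2: "B p (inverse x) (inverse q) N n l' = BN (\<lambda>k m. g (- m) (- k)) (inverse x) (inverse q) N n L'"
  proof (cases "N = 0")
    case True
    hence "l' = []" using len' by simp
    thus ?thesis using True by (simp add: B_def BN_def qpochL_def)
  next
    case False
    show ?thesis unfolding L'_def g2[symmetric]
    proof (rule B_conv[OF _ _ _ len' bnd' mono'])
      show "\<forall>k m. (k, m) \<noteq> (0, 0) \<longrightarrow> E p (inverse x powi k * inverse q powi m) \<noteq> 0"
        using generic2 by (auto simp: powi_inv mult_ac)
    qed (use False q0 x0 in auto)
  qed
  have partB: "B p q x n N l = B p (inverse x) (inverse q) N n l'"
    unfolding B1 B2 BN_dual[OF q0 x0 gnz gfl pL] by (rule BN_cong[OF agree])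
  show ?thesis using partA partB unfolding l'_def by simp
qed

end
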